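(* Let $(\mathbf A,G,H)$ be a tense Pavelka algebra whose underlying Pavelka algebra $\mathbf A$ is semisimple. The following are equivalent: (i) $G(x)\cdot G(y)\le G(x\cdot y)$ for all $x,y\in A$; (ii) $H(x)\cdot H(y)\le H(x\cdot y)$ for all $x,y\in A$; (iii) the natural time frame of $(\mathbf A,G,H)$ is boolean, i.e. $R(F,F')=\bigwedge_{a\in A}(G(a)/F'\rightarrow a/F)\in\{0,1\}$ for all $F,F'\in\mathrm{Spec_M}\mathbf A$; (iv) $G$ and $H$ are tense operators on the MV-reduct $(A;\oplus,\neg,\mathbf 0)$ in the sense of tense MV-algebras, i.e. for all $x,y\in A$: (T1) $G(1)=H(1)=1$; (T2) $G(x)\cdot G(y)\le G(x\cdot y)$, $H(x)\cdot H(y)\le H(x\cdot y)$; (T3) $G(x)\oplus G(y)\le G(x\oplus y)$, $H(x)\oplus H(y)\le H(x\oplus y)$; (T4) $G(x)\cdot G(x)=G(x\cdot x)$, $H(x)\cdot H(x)=H(x\cdot x)$; (T5) $G(x)\oplus G(x)=G(x\oplus x)$, $H(x)\oplus H(x)=H(x\oplus x)$; (T6) $\neg G(\neg H(x))\le x$, $\neg H(\neg G(x))\le x$.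
   Context: An MV-algebra $(A;\oplus,\neg,0)$ carries derived operations $1=\neg0$, $x\cdot y=\neg(\neg x\oplus\neg y)$, $x\rightarrow y=\neg x\oplus y$, $x\vee y=\neg(\neg x\oplus y)\oplus y$, $x\wedge y=\neg(\neg x\vee\neg y)$, order $x\le y$ iff $\neg x\oplus y=1$. The standard MV-algebra is $[0,1]$ with $x\oplus y=\min\{x+y,1\}$, $\neg x=1-x$. A Pavelka algebra is $\mathbf A=(A;\oplus,\neg,\{\mathbf r\mid r\in[0,1]\cap\mathbb Q\})$ with $(A;\oplus,\neg,\mathbf 0)$ an MV-algebra, $\mathbf r\oplus\mathbf s=\mathbf t$ whenever $\min\{r+s,1\}=t$, $\neg\mathbf r=\mathbf s$ whenever $1-r=s$. Filters are filters of the MV-reduct; $\mathrm{Spec_M}\mathbf A$ is the set of maximal proper filters; for $F\in\mathrm{Spec_M}\mathbf A$, $\mathbf A/F$ embeds uniquely into $[0,1]$ and $x/F$ is identified with its image in $[0,1]$. Semisimple: MV-reduct is a subdirect product of simple MV-algebras. A tense Pavelka algebra is $(\mathbf A,G,H)$ with $G,H\colon A\to A$ such that for all $x,y$ and constants $\mathbf r$: (PT1) $G(x\wedge y)=G(x)\wedge G(y)$, $H(x\wedge y)=H(x)\wedge H(y)$; (PT2) $\mathbf r\rightarrow G(x)=G(\mathbf r\rightarrow x)$, $\mathbf r\rightarrow H(x)=H(\mathbf r\rightarrow x)$; (PT3) $\neg H(\neg G(x))\le x$, $\neg G(\neg H(x))\le x$. *)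

theory Defs
  imports Complex_Main
begin

section \<open>MV-algebras given by a carrier A and operations ad (oplus), ng (neg), z (zero)\<close>

definition mv_one :: "('a \<Rightarrow> 'a) \<Rightarrow> 'a \<Rightarrow> 'a" where
  "mv_one ng z = ng z"

definition mv_mult :: "('a \<Rightarrow> 'a \<Rightarrow> 'a) \<Rightarrow> ('a \<Rightarrow> 'a) \<Rightarrow> 'a \<Rightarrow> 'a \<Rightarrow> 'a" where
  "mv_mult ad ng x y = ng (ad (ng x) (ng y))"

definition mv_imp :: "('a \<Rightarrow> 'a \<Rightarrow> 'a) \<Rightarrow> ('a \<Rightarrow> 'a) \<Rightarrow> 'a \<Rightarrow> 'a \<Rightarrow> 'a" where
  "mv_imp ad ng x y = ad (ng x) y"

definition mv_join :: "('a \<Rightarrow> 'a \<Rightarrow> 'a) \<Rightarrow> ('a \<Rightarrow> 'a) \<Rightarrow> 'a \<Rightarrow> 'a \<Rightarrow> 'a" where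
  "mv_join ad ng x y = ad (ng (ad (ng x) y)) y"

definition mv_meet :: "('a \<Rightarrow> 'a \<Rightarrow> 'a) \<Rightarrow> ('a \<Rightarrow> 'a) \<Rightarrow> 'a \<Rightarrow> 'a \<Rightarrow> 'a" where
  "mv_meet ad ng x y = ng (mv_join ad ng (ng x) (ng y))"

definition mv_le :: "('a \<Rightarrow> 'a \<Rightarrow> 'a) \<Rightarrow> ('a \<Rightarrow> 'a) \<Rightarrow> 'a \<Rightarrow> 'a \<Rightarrow> 'a \<Rightarrow> bool" where
  "mv_le ad ng z x y \<longleftrightarrow> ad (ng x) y = mv_one ng z"

definition mv_algebra :: "'a set \<Rightarrow> ('a \<Rightarrow> 'a \<Rightarrow> 'a) \<Rightarrow> ('a \<Rightarrow> 'a) \<Rightarrow> 'a \<Rightarrow> bool" where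
  "mv_algebra A ad ng z \<longleftrightarrow>
     z \<in> A \<and> (\<forall>x\<in>A. \<forall>y\<in>A. ad x y \<in> A) \<and> (\<forall>x\<in>A. ng x \<in> A) \<and>
     (\<forall>x\<in>A. \<forall>y\<in>A. \<forall>w\<in>A. ad x (ad y w) = ad (ad x y) w) \<and>
     (\<forall>x\<in>A. \<forall>y\<in>A. ad x y = ad y x) \<and>
     (\<forall>x\<in>A. ad x z = x) \<and>
     (\<forall>x\<in>A. ng (ng x) = x) \<and>
     (\<forall>x\<in>A. ad x (ng z) = ng z) \<and>
     (\<forall>x\<in>A. \<forall>y\<in>A. ad (ng (ad (ng x) y)) y = ad (ng (ad (ng y) x)) x)"

definition mv_filter :: "'a set \<Rightarrow> ('a \<Rightarrow> 'a \<Rightarrow> 'a) \<Rightarrow> ('a \<Rightarrow> 'a) \<Rightarrow> 'a \<Rightarrow> 'a set \<Rightarrow> bool" where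
  "mv_filter A ad ng z F \<longleftrightarrow>
     F \<subseteq> A \<and> mv_one ng z \<in> F \<and>
     (\<forall>x\<in>F. \<forall>y\<in>F. mv_mult ad ng x y \<in> F) \<and>
     (\<forall>x\<in>F. \<forall>y\<in>A. mv_le ad ng z x y \<longrightarrow> y \<in> F)"

definition max_filters :: "'a set \<Rightarrow> ('a \<Rightarrow> 'a \<Rightarrow> 'a) \<Rightarrow> ('a \<Rightarrow> 'a) \<Rightarrow> 'a \<Rightarrow> 'a set set" where
  "max_filters A ad ng z =
     {F. mv_filter A ad ng z F \<and> F \<noteq> A \<and>
         (\<forall>F'. mv_filter A ad ng z F' \<and> F \<subseteq> F' \<and> F' \<noteq> A \<longrightarrow> F' = F)}"

text \<open>Semisimple: the radical (intersection of all maximal filters) is trivial,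
  equivalently the MV-algebra is a subdirect product of simple MV-algebras.\<close>
definition mv_semisimple :: "'a set \<Rightarrow> ('a \<Rightarrow> 'a \<Rightarrow> 'a) \<Rightarrow> ('a \<Rightarrow> 'a) \<Rightarrow> 'a \<Rightarrow> bool" where
  "mv_semisimple A ad ng z \<longleftrightarrow>
     {x\<in>A. \<forall>F\<in>max_filters A ad ng z. x \<in> F} = {mv_one ng z}"

definition mv_hom_unit :: "'a set \<Rightarrow> ('a \<Rightarrow> 'a \<Rightarrow> 'a) \<Rightarrow> ('a \<Rightarrow> 'a) \<Rightarrow> 'a \<Rightarrow> ('a \<Rightarrow> real) \<Rightarrow> bool" where
  "mv_hom_unit A ad ng z h \<longleftrightarrow>
     (\<forall>x\<in>A. 0 \<le> h x \<and> h x \<le> 1) \<and>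
     (\<forall>x\<in>A. \<forall>y\<in>A. h (ad x y) = min (h x + h y) 1) \<and>
     (\<forall>x\<in>A. h (ng x) = 1 - h x) \<and> h z = 0 \<and>
     (\<forall>x. x \<notin> A \<longrightarrow> h x = 0)"

text \<open>x/F for a maximal filter F, identified with its image in [0,1]: the value of the
  unique homomorphism A \<rightarrow> [0,1] whose filter (preimage of 1) is F; it factors through
  the unique embedding A/F \<rightarrow> [0,1].\<close>
definition quot_val :: "'a set \<Rightarrow> ('a \<Rightarrow> 'a \<Rightarrow> 'a) \<Rightarrow> ('a \<Rightarrow> 'a) \<Rightarrow> 'a \<Rightarrow> 'a set \<Rightarrow> 'a \<Rightarrow> real" where
  "quot_val A ad ng z F x =
     (THE h. mv_hom_unit A ad ng z h \<and> (\<forall>y\<in>A. h y = 1 \<longleftrightarrow> y \<in> F)) x"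

definition luk_imp :: "real \<Rightarrow> real \<Rightarrow> real" where
  "luk_imp a b = min 1 (1 - a + b)"

section \<open>Pavelka algebras; constants r \<in> [0,1] \<inter> Q given by c r, with bold 0 = c 0\<close>

definition pavelka_algebra :: "'a set \<Rightarrow> ('a \<Rightarrow> 'a \<Rightarrow> 'a) \<Rightarrow> ('a \<Rightarrow> 'a) \<Rightarrow> (rat \<Rightarrow> 'a) \<Rightarrow> bool" where
  "pavelka_algebra A ad ng c \<longleftrightarrow>
     mv_algebra A ad ng (c 0) \<and>
     (\<forall>r. 0 \<le> r \<and> r \<le> 1 \<longrightarrow> c r \<in> A) \<and>
     (\<forall>r s. 0 \<le> r \<and> r \<le> 1 \<and> 0 \<le> s \<and> s \<le> 1 \<longrightarrow> ad (c r) (c s) = c (min (r + s) 1)) \<and>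
     (\<forall>r. 0 \<le> r \<and> r \<le> 1 \<longrightarrow> ng (c r) = c (1 - r))"

definition tense_pavelka :: "'a set \<Rightarrow> ('a \<Rightarrow> 'a \<Rightarrow> 'a) \<Rightarrow> ('a \<Rightarrow> 'a) \<Rightarrow> (rat \<Rightarrow> 'a)
    \<Rightarrow> ('a \<Rightarrow> 'a) \<Rightarrow> ('a \<Rightarrow> 'a) \<Rightarrow> bool" where
  "tense_pavelka A ad ng c G H \<longleftrightarrow>
     pavelka_algebra A ad ng c \<and>
     (\<forall>x\<in>A. G x \<in> A) \<and> (\<forall>x\<in>A. H x \<in> A) \<and>
     (\<forall>x\<in>A. \<forall>y\<in>A. G (mv_meet ad ng x y) = mv_meet ad ng (G x) (G y) \<and>
                    H (mv_meet ad ng x y) = mv_meet ad ng (H x) (H y)) \<and>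
     (\<forall>r x. 0 \<le> r \<and> r \<le> 1 \<and> x \<in> A \<longrightarrow>
            mv_imp ad ng (c r) (G x) = G (mv_imp ad ng (c r) x) \<and>
            mv_imp ad ng (c r) (H x) = H (mv_imp ad ng (c r) x)) \<and>
     (\<forall>x\<in>A. mv_le ad ng (c 0) (ng (H (ng (G x)))) x \<and>
            mv_le ad ng (c 0) (ng (G (ng (H x)))) x)"

definition time_rel :: "'a set \<Rightarrow> ('a \<Rightarrow> 'a \<Rightarrow> 'a) \<Rightarrow> ('a \<Rightarrow> 'a) \<Rightarrow> 'a \<Rightarrow> ('a \<Rightarrow> 'a)
    \<Rightarrow> 'a set \<Rightarrow> 'a set \<Rightarrow> real" where
  "time_rel A ad ng z G F F' =
     (INF a\<in>A. luk_imp (quot_val A ad ng z F' (G a)) (quot_val A ad ng z F a))"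

end

theory Submission
  imports Defs
begin
locale mv =
  fixes A :: "'a set" and ad :: "'a \<Rightarrow> 'a \<Rightarrow> 'a" and ng :: "'a \<Rightarrow> 'a" and z :: 'a
  assumes mv: "mv_algebra A ad ng z"
begin

abbreviation one where "one \<equiv> ng z"
abbreviation mul where "mul \<equiv> mv_mult ad ng"
abbreviation imp where "imp \<equiv> mv_imp ad ng"
abbreviation le where "le \<equiv> mv_le ad ng z"
abbreviation join where "join \<equiv> mv_join ad ng"
abbreviation meet where "meet \<equiv> mv_meet ad ng"

lemma z_in[simp]: "z \<in> A" using mv unfolding mv_algebra_def by blast
lemma ad_in[simp]: "x \<in> A \<Longrightarrow> y \<in> A \<Longrightarrow> ad x y \<in> A" using mv unfolding mv_algebra_def by blast
lemma ng_in[simp]: "x \<in> A \<Longrightarrow> ng x \<in> A" using mv unfolding mv_algebra_def by blast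
lemma ad_assoc: "x \<in> A \<Longrightarrow> y \<in> A \<Longrightarrow> w \<in> A \<Longrightarrow> ad (ad x y) w = ad x (ad y w)"
  using mv unfolding mv_algebra_def by metis
lemma ad_comm: "x \<in> A \<Longrightarrow> y \<in> A \<Longrightarrow> ad x y = ad y x" using mv unfolding mv_algebra_def by blast
lemma ad_z[simp]: "x \<in> A \<Longrightarrow> ad x z = x" using mv unfolding mv_algebra_def by blast
lemma nn[simp]: "x \<in> A \<Longrightarrow> ng (ng x) = x" using mv unfolding mv_algebra_def by blast
lemma ad_one[simp]: "x \<in> A \<Longrightarrow> ad x one = one" using mv unfolding mv_algebra_def by blast
lemma m6: "x \<in> A \<Longrightarrow> y \<in> A \<Longrightarrow> ad (ng (ad (ng x) y)) y = ad (ng (ad (ng y) x)) x"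
  using mv unfolding mv_algebra_def by blast

lemma one_in[simp]: "one \<in> A" by simp
lemma ng_one[simp]: "ng one = z" by simp
lemma ad_z_l[simp]: "x \<in> A \<Longrightarrow> ad z x = x" using ad_comm by force
lemma ad_one_l[simp]: "x \<in> A \<Longrightarrow> ad one x = one" using ad_comm by force
lemma ad_ng_self[simp]: "x \<in> A \<Longrightarrow> ad (ng x) x = one"
  using m6[of one x] by simp
lemma ad_ng_self2[simp]: "x \<in> A \<Longrightarrow> ad x (ng x) = one"
  using ad_ng_self ad_comm by (metis ng_in)
lemma ad_ac: "x \<in> A \<Longrightarrow> y \<in> A \<Longrightarrow> w \<in> A \<Longrightarrow> ad x (ad y w) = ad y (ad x w)"
  by (simp add: ad_assoc[symmetric] ad_comm[of x y])

lemma mul_def': "mul x y = ng (ad (ng x) (ng y))" by (simp add: mv_mult_def)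
lemma imp_def': "imp x y = ad (ng x) y" by (simp add: mv_imp_def)
lemma le_def': "le x y \<longleftrightarrow> ad (ng x) y = one" by (simp add: mv_le_def mv_one_def)
lemma join_def': "join x y = ad (ng (ad (ng x) y)) y" by (simp add: mv_join_def)
lemma meet_def': "meet x y = ng (join (ng x) (ng y))" by (simp add: mv_meet_def)

lemma mul_in[simp]: "x \<in> A \<Longrightarrow> y \<in> A \<Longrightarrow> mul x y \<in> A" by (simp add: mul_def')
lemma imp_in[simp]: "x \<in> A \<Longrightarrow> y \<in> A \<Longrightarrow> imp x y \<in> A" by (simp add: imp_def')
lemma join_in[simp]: "x \<in> A \<Longrightarrow> y \<in> A \<Longrightarrow> join x y \<in> A" by (simp add: join_def')
lemma meet_in[simp]: "x \<in> A \<Longrightarrow> y \<in> A \<Longrightarrow> meet x y \<in> A" by (simp add: meet_def')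

lemma ng_inj: "x \<in> A \<Longrightarrow> y \<in> A \<Longrightarrow> ng x = ng y \<Longrightarrow> x = y" by (metis nn)

lemma le_refl[simp]: "x \<in> A \<Longrightarrow> le x x" by (simp add: le_def')
lemma le_antisym: "x \<in> A \<Longrightarrow> y \<in> A \<Longrightarrow> le x y \<Longrightarrow> le y x \<Longrightarrow> x = y"
  using m6[of x y] by (simp add: le_def')
lemma le_ex: "x \<in> A \<Longrightarrow> y \<in> A \<Longrightarrow> le x y \<longleftrightarrow> (\<exists>w\<in>A. y = ad x w)"
proof
  assume "x \<in> A" "y \<in> A" "le x y"
  then have "y = ad (ng (ad (ng y) x)) x" using m6[of x y] by (simp add: le_def')
  then show "\<exists>w\<in>A. y = ad x w" using \<open>x\<in>A\<close> \<open>y\<in>A\<close> by (metis ad_comm ad_in ng_in)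
next
  assume "x \<in> A" "y \<in> A" "\<exists>w\<in>A. y = ad x w"
  then show "le x y" by (auto simp: le_def' ad_assoc[symmetric])
qed
lemma le_trans: "x \<in> A \<Longrightarrow> y \<in> A \<Longrightarrow> w \<in> A \<Longrightarrow> le x y \<Longrightarrow> le y w \<Longrightarrow> le x w"
proof -
  assume a: "x \<in> A" "y \<in> A" "w \<in> A" "le x y" "le y w"
  then obtain u where u: "u \<in> A" "y = ad x u" using le_ex by blast
  obtain v where v: "v \<in> A" "w = ad y v" using a le_ex by blast
  have "w = ad x (ad u v)" using u v a by (simp add: ad_assoc)
  then show ?thesis using a u v le_ex by auto
qed
lemma le_z[simp]: "x \<in> A \<Longrightarrow> le z x" by (simp add: le_def')
lemma le_one[simp]: "x \<in> A \<Longrightarrow> le x one" by (simp add: le_def')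
lemma le_ad: "x \<in> A \<Longrightarrow> y \<in> A \<Longrightarrow> le x (ad x y)" using le_ex by auto
lemma le_ad2: "x \<in> A \<Longrightarrow> y \<in> A \<Longrightarrow> le y (ad x y)" using le_ex ad_comm by auto
lemma ad_mono: "x \<in> A \<Longrightarrow> y \<in> A \<Longrightarrow> w \<in> A \<Longrightarrow> le x y \<Longrightarrow> le (ad x w) (ad y w)"
proof -
  assume a: "x \<in> A" "y \<in> A" "w \<in> A" "le x y"
  then obtain u where u: "u \<in> A" "y = ad x u" using le_ex by blast
  have "ad y w = ad (ad x w) u" using u a by (simp add: ad_assoc ad_comm[of u w])
  then show ?thesis using a u le_ex by auto
qed
lemma ad_mono2: "x \<in> A \<Longrightarrow> y \<in> A \<Longrightarrow> x' \<in> A \<Longrightarrow> y' \<in> A \<Longrightarrow> le x y \<Longrightarrow> le x' y' \<Longrightarrow> le (ad x x') (ad y y')"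
  by (metis ad_comm ad_in ad_mono le_trans)
lemma ng_anti: "x \<in> A \<Longrightarrow> y \<in> A \<Longrightarrow> le x y \<Longrightarrow> le (ng y) (ng x)"
  by (simp add: le_def' ad_comm)
lemma ng_le_iff: "x \<in> A \<Longrightarrow> y \<in> A \<Longrightarrow> le (ng y) (ng x) \<longleftrightarrow> le x y"
  by (metis ng_anti ng_in nn)

lemma mul_comm: "x \<in> A \<Longrightarrow> y \<in> A \<Longrightarrow> mul x y = mul y x" by (simp add: mul_def' ad_comm)
lemma mul_assoc: "x \<in> A \<Longrightarrow> y \<in> A \<Longrightarrow> w \<in> A \<Longrightarrow> mul (mul x y) w = mul x (mul y w)"
  by (simp add: mul_def' ad_assoc)
lemma mul_ac: "x \<in> A \<Longrightarrow> y \<in> A \<Longrightarrow> w \<in> A \<Longrightarrow> mul x (mul y w) = mul y (mul x w)"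
  by (simp add: mul_assoc[symmetric] mul_comm[of x y])
lemma mul_one[simp]: "x \<in> A \<Longrightarrow> mul x one = x" by (simp add: mul_def')
lemma mul_one_l[simp]: "x \<in> A \<Longrightarrow> mul one x = x" by (simp add: mul_def')
lemma mul_z[simp]: "x \<in> A \<Longrightarrow> mul x z = z" by (simp add: mul_def')
lemma mul_z_l[simp]: "x \<in> A \<Longrightarrow> mul z x = z" by (simp add: mul_def')
lemma mul_ng_self[simp]: "x \<in> A \<Longrightarrow> mul x (ng x) = z" by (simp add: mul_def')
lemma mul_ng_self2[simp]: "x \<in> A \<Longrightarrow> mul (ng x) x = z" by (simp add: mul_def')
lemma ng_mul: "x \<in> A \<Longrightarrow> y \<in> A \<Longrightarrow> ng (mul x y) = ad (ng x) (ng y)" by (simp add: mul_def')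
lemma ng_ad: "x \<in> A \<Longrightarrow> y \<in> A \<Longrightarrow> ng (ad x y) = mul (ng x) (ng y)" by (simp add: mul_def')
lemma mul_mono: "x \<in> A \<Longrightarrow> y \<in> A \<Longrightarrow> w \<in> A \<Longrightarrow> le x y \<Longrightarrow> le (mul x w) (mul y w)"
  by (simp add: mul_def' ng_le_iff ad_mono ng_anti)
lemma mul_mono2: "x \<in> A \<Longrightarrow> y \<in> A \<Longrightarrow> x' \<in> A \<Longrightarrow> y' \<in> A \<Longrightarrow> le x y \<Longrightarrow> le x' y' \<Longrightarrow> le (mul x x') (mul y y')"
  by (metis mul_comm mul_in mul_mono le_trans)
lemma mul_mono_r: "x \<in> A \<Longrightarrow> y \<in> A \<Longrightarrow> w \<in> A \<Longrightarrow> le y w \<Longrightarrow> le (mul x y) (mul x w)"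
  using mul_mono[of y w x] mul_comm[of x y] mul_comm[of x w] by simp
lemma mul_le: "x \<in> A \<Longrightarrow> y \<in> A \<Longrightarrow> le (mul x y) x"
  using mul_mono[of y one x] by (simp add: mul_comm)
lemma mul_le2: "x \<in> A \<Longrightarrow> y \<in> A \<Longrightarrow> le (mul x y) y"
  using mul_le mul_comm by metis

lemma resid: "x \<in> A \<Longrightarrow> y \<in> A \<Longrightarrow> w \<in> A \<Longrightarrow> le (mul x y) w \<longleftrightarrow> le x (imp y w)"
  by (simp add: le_def' mul_def' imp_def' ad_assoc)
lemma le_imp_one: "x \<in> A \<Longrightarrow> y \<in> A \<Longrightarrow> le x y \<longleftrightarrow> imp x y = one"
  by (simp add: le_def' imp_def')
lemma le_mul_z: "x \<in> A \<Longrightarrow> y \<in> A \<Longrightarrow> le x y \<longleftrightarrow> mul x (ng y) = z"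
proof -
  assume a: "x \<in> A" "y \<in> A"
  have e: "mul x (ng y) = ng (ad (ng x) y)" using a by (simp add: mul_def')
  have "ng (ad (ng x) y) = z \<longleftrightarrow> ad (ng x) y = one" using a nn[of "ad (ng x) y"] by auto
  then show ?thesis using e by (simp add: le_def')
qed
lemma mp: "x \<in> A \<Longrightarrow> y \<in> A \<Longrightarrow> le (mul x (imp x y)) y"
  using resid[of "imp x y" x y] mul_comm[of x "imp x y"] by simp
lemma imp_contra: "x \<in> A \<Longrightarrow> y \<in> A \<Longrightarrow> imp (ng y) (ng x) = imp x y"
  by (simp add: imp_def' ad_comm)
lemma imp_mono2: "x \<in> A \<Longrightarrow> y \<in> A \<Longrightarrow> w \<in> A \<Longrightarrow> le y w \<Longrightarrow> le (imp x y) (imp x w)"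
  by (simp add: imp_def' ad_comm ad_mono)
lemma imp_anti1: "x \<in> A \<Longrightarrow> y \<in> A \<Longrightarrow> w \<in> A \<Longrightarrow> le x y \<Longrightarrow> le (imp y w) (imp x w)"
  by (simp add: imp_def' ad_mono ng_anti)
lemma imp_trans: "x \<in> A \<Longrightarrow> y \<in> A \<Longrightarrow> w \<in> A \<Longrightarrow> le (mul (imp x y) (imp y w)) (imp x w)"
proof -
  assume a: "x \<in> A" "y \<in> A" "w \<in> A"
  have "le (mul x (mul (imp x y) (imp y w))) (mul y (imp y w))"
    using a mp[of x y] mul_mono[of "mul x (imp x y)" y "imp y w"] by (simp add: mul_assoc)
  moreover have "le (mul y (imp y w)) w" using a mp by simp
  ultimately have "le (mul x (mul (imp x y) (imp y w))) w" using a le_trans by (meson imp_in mul_in)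
  then have "le (mul (mul (imp x y) (imp y w)) x) w" using a by (simp add: mul_comm)
  then show ?thesis using a resid by simp
qed
lemma imp_one_l[simp]: "x \<in> A \<Longrightarrow> imp one x = x" by (simp add: imp_def')
lemma imp_z_l[simp]: "x \<in> A \<Longrightarrow> imp z x = one" by (simp add: imp_def')
lemma imp_one_r[simp]: "x \<in> A \<Longrightarrow> imp x one = one" by (simp add: imp_def')
lemma imp_z_r[simp]: "x \<in> A \<Longrightarrow> imp x z = ng x" by (simp add: imp_def')

end

context mv begin

lemma join_alt: "x \<in> A \<Longrightarrow> y \<in> A \<Longrightarrow> join x y = ad (mul x (ng y)) y"
  by (simp add: join_def' mul_def')
lemma join_comm: "x \<in> A \<Longrightarrow> y \<in> A \<Longrightarrow> join x y = join y x"
  using m6 by (simp add: join_def')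
lemma join_ub2: "x \<in> A \<Longrightarrow> y \<in> A \<Longrightarrow> le y (join x y)"
  by (simp add: join_def' le_ad2)
lemma join_ub1: "x \<in> A \<Longrightarrow> y \<in> A \<Longrightarrow> le x (join x y)"
  using join_ub2 join_comm by metis
lemma join_eq: "x \<in> A \<Longrightarrow> y \<in> A \<Longrightarrow> le x y \<Longrightarrow> join x y = y"
  by (simp add: join_def' le_def')
lemma join_eq2: "x \<in> A \<Longrightarrow> y \<in> A \<Longrightarrow> le y x \<Longrightarrow> join x y = x"
  using join_eq join_comm by metis
lemma join_lub: "x \<in> A \<Longrightarrow> y \<in> A \<Longrightarrow> w \<in> A \<Longrightarrow> le x w \<Longrightarrow> le y w \<Longrightarrow> le (join x y) w"
proof -
  assume a: "x \<in> A" "y \<in> A" "w \<in> A" "le x w" "le y w"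
  have "le (ad (mul x (ng y)) y) (ad (mul w (ng y)) y)"
    using a by (simp add: ad_mono mul_mono)
  moreover have "ad (mul w (ng y)) y = w" using a join_alt[of w y] join_eq2[of w y] by simp
  ultimately show ?thesis using a by (simp add: join_alt)
qed
lemma meet_alt: "x \<in> A \<Longrightarrow> y \<in> A \<Longrightarrow> meet x y = mul (ad x (ng y)) y"
  by (simp add: meet_def' join_def' mul_def')
lemma ng_join: "x \<in> A \<Longrightarrow> y \<in> A \<Longrightarrow> ng (join x y) = meet (ng x) (ng y)"
  by (simp add: meet_def')
lemma ng_meet: "x \<in> A \<Longrightarrow> y \<in> A \<Longrightarrow> ng (meet x y) = join (ng x) (ng y)"
  by (simp add: meet_def')
lemma meet_lb1: "x \<in> A \<Longrightarrow> y \<in> A \<Longrightarrow> le (meet x y) x"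
  using join_ub1[of "ng x" "ng y"] ng_le_iff[of "meet x y" x] by (simp add: ng_meet)
lemma meet_lb2: "x \<in> A \<Longrightarrow> y \<in> A \<Longrightarrow> le (meet x y) y"
  using join_ub2[of "ng x" "ng y"] ng_le_iff[of "meet x y" y] by (simp add: ng_meet)
lemma meet_glb: "x \<in> A \<Longrightarrow> y \<in> A \<Longrightarrow> w \<in> A \<Longrightarrow> le w x \<Longrightarrow> le w y \<Longrightarrow> le w (meet x y)"
proof -
  assume a: "x \<in> A" "y \<in> A" "w \<in> A" "le w x" "le w y"
  have "le (join (ng x) (ng y)) (ng w)" using a by (simp add: join_lub ng_anti)
  then show ?thesis using a ng_le_iff[of w "meet x y"] by (simp add: ng_meet)
qed
lemma meet_eq: "x \<in> A \<Longrightarrow> y \<in> A \<Longrightarrow> le x y \<Longrightarrow> meet x y = x"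
  by (meson le_antisym le_refl meet_glb meet_in meet_lb1)

lemma mul_join: "x \<in> A \<Longrightarrow> y \<in> A \<Longrightarrow> w \<in> A \<Longrightarrow> mul x (join y w) = join (mul x y) (mul x w)"
proof -
  assume a: "x \<in> A" "y \<in> A" "w \<in> A"
  define j where "j = join (mul x y) (mul x w)"
  have j: "j \<in> A" using a by (simp add: j_def)
  have "le (mul x y) j" using a by (simp add: j_def join_ub1)
  then have 1: "le y (imp x j)" using a j resid[of y x j] mul_comm[of x y] by simp
  have "le (mul x w) j" using a by (simp add: j_def join_ub2)
  then have 2: "le w (imp x j)" using a j resid[of w x j] mul_comm[of x w] by simp
  have "le (join y w) (imp x j)" using 1 2 a j by (simp add: join_lub)
  then have "le (mul x (join y w)) j" using a j resid[of "join y w" x j] mul_comm[of x "join y w"] by simp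
  moreover have "le j (mul x (join y w))" unfolding j_def using a
    using a by (simp add: join_lub join_ub1 join_ub2 mul_mono_r)
  ultimately show ?thesis using a j by (simp add: j_def le_antisym)
qed

lemma pl1: "x \<in> A \<Longrightarrow> y \<in> A \<Longrightarrow> mul x (ng (meet x y)) = mul x (ng y)"
proof -
  assume a: "x \<in> A" "y \<in> A"
  have "mul x (ng (meet x y)) = join (mul x (ng x)) (mul x (ng y))" using a by (simp add: ng_meet mul_join)
  also have "\<dots> = mul x (ng y)" using a by (simp add: join_eq)
  finally show ?thesis .
qed
lemma pl2: "x \<in> A \<Longrightarrow> m \<in> A \<Longrightarrow> le m x \<Longrightarrow> ad (mul x (ng m)) m = x"
  using join_alt[of x m] join_eq2[of x m] by simp
lemma pl3: "t \<in> A \<Longrightarrow> m \<in> A \<Longrightarrow> le t (ng m) \<Longrightarrow> ad t m = m \<Longrightarrow> t = z"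
proof -
  assume a: "t \<in> A" "m \<in> A" "le t (ng m)" "ad t m = m"
  have "t = meet t (ng m)" using a by (simp add: meet_eq)
  also have "\<dots> = mul (ad t m) (ng m)" using a by (simp add: meet_alt)
  also have "\<dots> = z" using a by simp
  finally show ?thesis .
qed
lemma pl_main: "x \<in> A \<Longrightarrow> y \<in> A \<Longrightarrow> meet (mul x (ng y)) (mul y (ng x)) = z"
proof -
  assume a: "x \<in> A" "y \<in> A"
  define m where "m = meet x y"
  have m: "m \<in> A" "le m x" "le m y" using a by (auto simp: m_def meet_lb1 meet_lb2)
  have ea: "mul x (ng y) = mul x (ng m)" using a pl1 by (simp add: m_def)
  have eb: "mul y (ng x) = mul y (ng m)" using a pl1[of y x] meet_def' join_comm by (simp add: m_def)
  define t where "t = meet (mul x (ng m)) (mul y (ng m))"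
  have t: "t \<in> A" using a m by (simp add: t_def)
  have ta: "le t (mul x (ng m))" and tb: "le t (mul y (ng m))" using a m by (simp_all add: t_def meet_lb1 meet_lb2)
  have "le (ad t m) (ad (mul x (ng m)) m)" using a m t ta by (simp add: ad_mono)
  then have 1: "le (ad t m) x" using pl2[of x m] a m by simp
  have "le (ad t m) (ad (mul y (ng m)) m)" using a m t tb by (simp add: ad_mono)
  then have 2: "le (ad t m) y" using pl2[of y m] a m by simp
  have "le (ad t m) m" using 1 2 a m t by (simp add: m_def meet_glb)
  then have "ad t m = m" using le_antisym a m t le_ad2 by simp
  moreover have "le t (ng m)" using ta a m t le_trans[OF t _ _ ta mul_le2] by simp
  ultimately have "t = z" using pl3 t m by simp
  then show ?thesis using ea eb by (simp add: t_def)
qed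
lemma prelin: "x \<in> A \<Longrightarrow> y \<in> A \<Longrightarrow> join (imp x y) (imp y x) = one"
proof -
  assume a: "x \<in> A" "y \<in> A"
  have "ng (join (imp x y) (imp y x)) = meet (mul x (ng y)) (mul y (ng x))"
    using a by (simp add: ng_join imp_def' mul_def')
  then have "ng (join (imp x y) (imp y x)) = z" using a pl_main by simp
  then show ?thesis using a nn[of "join (imp x y) (imp y x)"] by simp
qed

lemma join_le_ad: "x \<in> A \<Longrightarrow> y \<in> A \<Longrightarrow> le (join x y) (ad x y)"
  using join_alt[of x y] ad_mono[of "mul x (ng y)" x y] mul_le by simp

lemma I2: "x \<in> A \<Longrightarrow> y \<in> A \<Longrightarrow> u \<in> A \<Longrightarrow> v \<in> A \<Longrightarrow>
  le (mul (imp x y) (imp u v)) (imp (mul x u) (mul y v))"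
proof -
  assume a: "x \<in> A" "y \<in> A" "u \<in> A" "v \<in> A"
  have "mul (mul (imp x y) (imp u v)) (mul x u) = mul (mul x (imp x y)) (mul u (imp u v))"
    using a by (simp add: mul_assoc mul_ac mul_comm)
  moreover have "le (mul (mul x (imp x y)) (mul u (imp u v))) (mul y v)"
    using a by (simp add: mp mul_mono2)
  ultimately have "le (mul (mul (imp x y) (imp u v)) (mul x u)) (mul y v)" by simp
  then show ?thesis using a resid[of "mul (imp x y) (imp u v)" "mul x u" "mul y v"] by simp
qed
lemma I1: "x \<in> A \<Longrightarrow> y \<in> A \<Longrightarrow> u \<in> A \<Longrightarrow> v \<in> A \<Longrightarrow>
  le (mul (imp x y) (imp u v)) (imp (ad x u) (ad y v))"
proof -
  assume a: "x \<in> A" "y \<in> A" "u \<in> A" "v \<in> A"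
  have "le (mul (imp (ng y) (ng x)) (imp (ng v) (ng u))) (imp (mul (ng y) (ng v)) (mul (ng x) (ng u)))"
    using a by (simp add: I2)
  then show ?thesis using a by (simp add: imp_contra ng_ad[symmetric])
qed

primrec pw :: "'a \<Rightarrow> nat \<Rightarrow> 'a" where
  "pw x 0 = one" | "pw x (Suc n) = mul x (pw x n)"

lemma pw_in[simp]: "x \<in> A \<Longrightarrow> pw x n \<in> A" by (induction n) auto
lemma pw_add: "x \<in> A \<Longrightarrow> pw x (m + n) = mul (pw x m) (pw x n)"
  by (induction m) (auto simp: mul_assoc)
lemma pw_mono: "x \<in> A \<Longrightarrow> y \<in> A \<Longrightarrow> le x y \<Longrightarrow> le (pw x n) (pw y n)"
  by (induction n) (auto simp: mul_mono2)
lemma pw_one[simp]: "pw one n = one" by (induction n) auto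
lemma pw_1[simp]: "x \<in> A \<Longrightarrow> pw x (Suc 0) = x" by simp
lemma pw_imp: "x \<in> A \<Longrightarrow> y \<in> A \<Longrightarrow> le (pw (imp x y) n) (imp (pw x n) (pw y n))"
proof (induction n)
  case 0 then show ?case by simp
next
  case (Suc n)
  then have "le (mul (imp x y) (pw (imp x y) n)) (mul (imp x y) (imp (pw x n) (pw y n)))"
    by (simp add: mul_mono_r)
  moreover have "le (mul (imp x y) (imp (pw x n) (pw y n))) (imp (pw x (Suc n)) (pw y (Suc n)))"
    using Suc.prems by (simp add: I2)
  ultimately show ?case
    using le_trans[of "mul (imp x y) (pw (imp x y) n)" "mul (imp x y) (imp (pw x n) (pw y n))"
        "imp (pw x (Suc n)) (pw y (Suc n))"] Suc.prems by (simp del: pw.simps) (simp)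
qed
lemma join_pw: "x \<in> A \<Longrightarrow> y \<in> A \<Longrightarrow> join x y = one \<Longrightarrow> join (pw x n) y = one"
proof (induction n)
  case 0 then show ?case by (simp add: join_eq2)
next
  case (Suc n)
  define J where "J = join (pw x n) y"
  have J: "J \<in> A" "J = one" using Suc by (auto simp: J_def)
  have "mul (join x y) J = join (mul x J) (mul y J)"
    using Suc.prems J mul_join mul_comm by (metis join_in)
  moreover have "le (mul x J) (join (pw x (Suc n)) y)"
  proof -
    have "mul x J = join (pw x (Suc n)) (mul x y)" using Suc.prems by (simp add: J_def mul_join)
    moreover have "le (join (pw x (Suc n)) (mul x y)) (join (pw x (Suc n)) y)"
      using Suc.prems by (simp add: join_lub join_ub1 join_ub2 mul_le2 le_trans[of "mul x y" y] del: pw.simps)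
    ultimately show ?thesis by simp
  qed
  moreover have "le (mul y J) (join (pw x (Suc n)) y)"
    using Suc.prems J le_trans[of "mul y J" y] mul_le join_ub2 by (simp del: pw.simps)
  ultimately have "le one (join (pw x (Suc n)) y)"
    using Suc.prems J join_lub[of "mul x J" "mul y J" "join (pw x (Suc n)) y"]
    by (simp del: pw.simps)
  moreover have "join (pw x (Suc n)) y \<in> A" using Suc.prems by (simp del: pw.simps)
  ultimately show ?case using le_antisym[of "join (pw x (Suc n)) y" one] le_one[of "join (pw x (Suc n)) y"] one_in by blast
qed

end

context mv begin

abbreviation filt where "filt \<equiv> mv_filter A ad ng z"
abbreviation Mx where "Mx \<equiv> max_filters A ad ng z"

lemma filt_sub: "filt F \<Longrightarrow> F \<subseteq> A" by (simp add: mv_filter_def)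
lemma filt_inA: "filt F \<Longrightarrow> x \<in> F \<Longrightarrow> x \<in> A" using filt_sub by blast
lemma filt_one: "filt F \<Longrightarrow> one \<in> F" by (simp add: mv_filter_def mv_one_def)
lemma filt_mul: "filt F \<Longrightarrow> x \<in> F \<Longrightarrow> y \<in> F \<Longrightarrow> mul x y \<in> F" by (simp add: mv_filter_def)
lemma filt_up: "filt F \<Longrightarrow> x \<in> F \<Longrightarrow> y \<in> A \<Longrightarrow> le x y \<Longrightarrow> y \<in> F" by (simp add: mv_filter_def)
lemma filt_up2: "filt F \<Longrightarrow> x \<in> F \<Longrightarrow> le x y \<Longrightarrow> y \<in> A \<Longrightarrow> y \<in> F"
  using filt_up by blast
lemma filt_mp: "filt F \<Longrightarrow> x \<in> F \<Longrightarrow> imp x y \<in> F \<Longrightarrow> y \<in> A \<Longrightarrow> y \<in> F"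
  by (meson filt_inA filt_mul filt_up mp mul_in)
lemma filt_meet: "filt F \<Longrightarrow> x \<in> F \<Longrightarrow> y \<in> F \<Longrightarrow> meet x y \<in> F"
proof -
  assume a: "filt F" "x \<in> F" "y \<in> F"
  then have xy: "x \<in> A" "y \<in> A" using filt_inA by auto
  have "le (mul x y) (meet x y)" using xy by (simp add: meet_glb mul_le mul_le2)
  moreover have "mul x y \<in> F" using a filt_mul by blast
  ultimately show ?thesis using a xy filt_up[of F "mul x y" "meet x y"] by simp
qed
lemma filt_pw: "filt F \<Longrightarrow> x \<in> F \<Longrightarrow> pw x n \<in> F"
  by (induction n) (auto simp: filt_one filt_mul)
lemma filt_z: "filt F \<Longrightarrow> z \<in> F \<Longrightarrow> F = A"
  using filt_sub filt_up le_z by blast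
lemma Mx_filt: "F \<in> Mx \<Longrightarrow> filt F" by (simp add: max_filters_def)
lemma Mx_ne: "F \<in> Mx \<Longrightarrow> F \<noteq> A" by (simp add: max_filters_def)
lemma Mx_z: "F \<in> Mx \<Longrightarrow> z \<notin> F" using Mx_filt Mx_ne filt_z by blast
lemma Mx_max: "F \<in> Mx \<Longrightarrow> filt F' \<Longrightarrow> F \<subseteq> F' \<Longrightarrow> F' \<noteq> A \<Longrightarrow> F' = F"
  by (simp add: max_filters_def)

lemma max_M2:
  assumes F: "F \<in> Mx" and x: "x \<in> A" "x \<notin> F"
  shows "\<exists>n. ng (pw x n) \<in> F"
proof -
  have fF: "filt F" using F Mx_filt by blast
  define F2 where "F2 = {y\<in>A. \<exists>f\<in>F. \<exists>n. le (mul f (pw x n)) y}"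
  have f2: "filt F2"
    unfolding mv_filter_def
  proof (intro conjI ballI impI)
    show "F2 \<subseteq> A" by (auto simp: F2_def)
    show "mv_one ng z \<in> F2" unfolding F2_def mv_one_def using fF filt_one[OF fF] x
      by (auto intro!: bexI[of _ one] exI[of _ 0])
  next
    fix a b assume ab: "a \<in> F2" "b \<in> F2"
    then obtain f1 n1 f2 n2 where h: "f1 \<in> F" "le (mul f1 (pw x n1)) a" "f2 \<in> F" "le (mul f2 (pw x n2)) b"
      "a \<in> A" "b \<in> A" by (auto simp: F2_def)
    have fa: "f1 \<in> A" "f2 \<in> A" using h fF filt_inA by auto
    have "mul (mul f1 f2) (pw x (n1 + n2)) = mul (mul f1 (pw x n1)) (mul f2 (pw x n2))"
      using fa x by (simp add: pw_add mul_assoc mul_ac)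
    moreover have "le (mul (mul f1 (pw x n1)) (mul f2 (pw x n2))) (mul a b)"
      using h fa x by (simp add: mul_mono2)
    ultimately have "le (mul (mul f1 f2) (pw x (n1 + n2))) (mul a b)" by simp
    moreover have "mul f1 f2 \<in> F" using h fF filt_mul by blast
    ultimately show "mul a b \<in> F2" unfolding F2_def using h mul_in by blast
  next
    fix a b assume ab: "a \<in> F2" "b \<in> A" "le a b"
    then obtain f n where fn: "f \<in> F" "le (mul f (pw x n)) a" "a \<in> A" by (auto simp: F2_def)
    have "le (mul f (pw x n)) b" using le_trans[OF _ _ _ fn(2) ab(3)] fn fF filt_inA x ab by simp
    then show "b \<in> F2" unfolding F2_def using fn ab by blast
  qed
  have sub: "F \<subseteq> F2"
  proof
    fix y assume y: "y \<in> F"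
    then have "y \<in> A" using fF filt_inA by blast
    then have "le (mul y (pw x 0)) y" by simp
    then show "y \<in> F2" unfolding F2_def using y \<open>y \<in> A\<close> by blast
  qed
  have xin: "x \<in> F2" unfolding F2_def using fF filt_one[OF fF] x
    by (auto intro!: bexI[of _ one] exI[of _ 1])
  have "F2 = A"
  proof (rule ccontr)
    assume "F2 \<noteq> A"
    then have "F2 = F" using Mx_max[OF F f2 sub] by simp
    then show False using xin x by simp
  qed
  then have "z \<in> F2" by simp
  then obtain f n where fn: "f \<in> F" "le (mul f (pw x n)) z" unfolding F2_def by auto
  then have "le f (imp (pw x n) z)" using fF filt_inA x resid by simp
  then have "le f (ng (pw x n))" using x by simp
  then show ?thesis using fn fF filt_up filt_inA x by (meson ng_in pw_in)
qed

lemma max_prime: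
  assumes F: "F \<in> Mx" and xy: "x \<in> A" "y \<in> A"
  shows "imp x y \<in> F \<or> imp y x \<in> F"
proof (rule ccontr)
  assume "\<not> (imp x y \<in> F \<or> imp y x \<in> F)"
  then have n: "imp x y \<notin> F" "imp y x \<notin> F" by auto
  define u where "u = imp x y"
  define v where "v = imp y x"
  have uv: "u \<in> A" "v \<in> A" using xy by (auto simp: u_def v_def)
  obtain n where n1: "ng (pw u n) \<in> F" using max_M2[OF F] n uv by (auto simp: u_def)
  obtain m where n2: "ng (pw v m) \<in> F" using max_M2[OF F] n uv by (auto simp: v_def)
  have "join u v = one" using prelin xy by (simp add: u_def v_def)
  then have "join (pw u n) v = one" using join_pw uv by simp
  then have "join v (pw u n) = one" using join_comm uv by simp
  then have "join (pw v m) (pw u n) = one" using join_pw uv by simp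
  then have "le one (ad (pw v m) (pw u n))" using join_le_ad[of "pw v m" "pw u n"] uv by simp
  then have "ad (pw v m) (pw u n) = one" using uv le_antisym le_one by simp
  then have "mul (ng (pw v m)) (ng (pw u n)) = z" using uv ng_ad[of "pw v m" "pw u n"] by simp
  moreover have "mul (ng (pw v m)) (ng (pw u n)) \<in> F" using n1 n2 F Mx_filt filt_mul by blast
  ultimately show False using F Mx_z by simp
qed

lemma zorn_max:
  assumes fl: "filt Fl" and zn: "z \<notin> Fl"
  shows "\<exists>F\<in>Mx. Fl \<subseteq> F"
proof -
  define S where "S = {F. filt F \<and> Fl \<subseteq> F \<and> z \<notin> F}"
  have "\<forall>C\<in>chains S. \<exists>U\<in>S. \<forall>X\<in>C. X \<subseteq> U"
  proof
    fix C assume C: "C \<in> chains S"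
    show "\<exists>U\<in>S. \<forall>X\<in>C. X \<subseteq> U"
    proof (cases "C = {}")
      case True then show ?thesis using fl zn by (auto simp: S_def)
    next
      case False
      have CS: "C \<subseteq> S" using C chainsD2 by blast
      have U: "filt (\<Union>C)" unfolding mv_filter_def
      proof (intro conjI ballI impI)
        show "\<Union>C \<subseteq> A" using CS by (auto simp: S_def mv_filter_def)
        show "mv_one ng z \<in> \<Union>C" using CS False by (auto simp: S_def mv_filter_def)
      next
        fix a b assume "a \<in> \<Union>C" "b \<in> \<Union>C"
        then obtain X Y where XY: "X \<in> C" "Y \<in> C" "a \<in> X" "b \<in> Y" by auto
        then have "X \<subseteq> Y \<or> Y \<subseteq> X" using chainsD C by blast
        then show "mul a b \<in> \<Union>C"
        proof
          assume "X \<subseteq> Y"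
          then have "mul a b \<in> Y" using XY CS filt_mul unfolding S_def by blast
          then show ?thesis using XY by blast
        next
          assume "Y \<subseteq> X"
          then have "mul a b \<in> X" using XY CS filt_mul unfolding S_def by blast
          then show ?thesis using XY by blast
        qed
      next
        fix a b assume "a \<in> \<Union>C" "b \<in> A" "le a b"
        then show "b \<in> \<Union>C" using CS filt_up unfolding S_def by blast
      qed
      have "\<Union>C \<in> S" using U CS False by (auto simp: S_def)
      then show ?thesis by blast
    qed
  qed
  then obtain M where M: "M \<in> S" "\<forall>X\<in>S. M \<subseteq> X \<longrightarrow> X = M" using Zorn_Lemma2 by blast
  have "M \<in> Mx" unfolding max_filters_def
  proof (intro CollectI conjI allI impI)
    show "filt M" using M by (simp add: S_def)
    show "M \<noteq> A" using M by (auto simp: S_def)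
  next
    fix F' assume h: "filt F' \<and> M \<subseteq> F' \<and> F' \<noteq> A"
    then have "z \<notin> F'" using filt_z by blast
    then have "F' \<in> S" using h M by (auto simp: S_def)
    then show "F' = M" using M h by blast
  qed
  then show ?thesis using M by (auto simp: S_def)
qed

end

lemma rat_dense_open: "(x::real) < y \<Longrightarrow> \<exists>r::rat. x < of_rat r \<and> of_rat r < y"
  using of_rat_dense by blast

lemma rat_below: "(0::real) \<le> x \<Longrightarrow> x \<le> 1 \<Longrightarrow> e > 0 \<Longrightarrow>
   \<exists>r::rat. 0 \<le> r \<and> r \<le> 1 \<and> of_rat r \<le> x \<and> x - e < of_rat r"
proof -
  assume a: "0 \<le> x" "x \<le> 1" "e > 0"
  show ?thesis
  proof (cases "x - e < 0")
    case True then show ?thesis using a by (intro exI[of _ 0]) auto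
  next
    case False
    obtain r :: rat where r: "x - e < of_rat r" "of_rat r < x" using rat_dense_open[of "x - e" x] a by auto
    have "0 \<le> (of_rat r::real)" using r False by linarith
    moreover have "(of_rat r::real) \<le> 1" using r a by linarith
    ultimately have "0 \<le> r" "r \<le> 1" by simp_all
    then show ?thesis using r by (intro exI[of _ r]) auto
  qed
qed

lemma dens_eq: "(X::real) \<in> {0..1} \<Longrightarrow> Y \<in> {0..1} \<Longrightarrow>
   (\<And>r::rat. 0 \<le> r \<Longrightarrow> r \<le> 1 \<Longrightarrow> (of_rat r \<le> X \<longleftrightarrow> of_rat r \<le> Y)) \<Longrightarrow> X = Y"
proof (rule ccontr)
  assume a: "X \<in> {0..1}" "Y \<in> {0..1}" "\<And>r::rat. 0 \<le> r \<Longrightarrow> r \<le> 1 \<Longrightarrow> (of_rat r \<le> X \<longleftrightarrow> of_rat r \<le> Y)" "X \<noteq> Y"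
  have X01: "0 \<le> X" "X \<le> 1" "0 \<le> Y" "Y \<le> 1" using a by auto
  show False
  proof (cases "X < Y")
    case True
    obtain r :: rat where r: "X < of_rat r" "of_rat r < Y" using rat_dense_open True by blast
    have "0 \<le> (of_rat r::real)" "(of_rat r::real) \<le> 1" using r X01 by linarith+
    then have "0 \<le> r" "r \<le> 1" by simp_all
    then show False using a(3)[of r] r by auto
  next
    case False
    then have "Y < X" using a by auto
    obtain r :: rat where r: "Y < of_rat r" "of_rat r < X" using rat_dense_open \<open>Y < X\<close> by blast
    have "0 \<le> (of_rat r::real)" "(of_rat r::real) \<le> 1" using r X01 by linarith+
    then have "0 \<le> r" "r \<le> 1" by simp_all
    then show False using a(3)[of r] r by auto
  qed
qed

locale pav =
  fixes A :: "'a set" and ad :: "'a \<Rightarrow> 'a \<Rightarrow> 'a" and ng :: "'a \<Rightarrow> 'a" and c :: "rat \<Rightarrow> 'a"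
  assumes pav: "pavelka_algebra A ad ng c"

sublocale pav \<subseteq> mv A ad ng "c 0"
  using pav by (unfold_locales) (simp add: pavelka_algebra_def)

context pav begin

lemma c_in[simp]: "0 \<le> r \<Longrightarrow> r \<le> 1 \<Longrightarrow> c r \<in> A"
  using pav by (simp add: pavelka_algebra_def)
lemma c_ad: "0 \<le> r \<Longrightarrow> r \<le> 1 \<Longrightarrow> 0 \<le> s \<Longrightarrow> s \<le> 1 \<Longrightarrow> ad (c r) (c s) = c (min (r + s) 1)"
  using pav by (simp add: pavelka_algebra_def)
lemma c_ng: "0 \<le> r \<Longrightarrow> r \<le> 1 \<Longrightarrow> ng (c r) = c (1 - r)"
  using pav by (simp add: pavelka_algebra_def)
lemma c1: "c 1 = one" using c_ng[of 0] by simp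
lemma c_imp: "0 \<le> r \<Longrightarrow> r \<le> 1 \<Longrightarrow> 0 \<le> s \<Longrightarrow> s \<le> 1 \<Longrightarrow> imp (c r) (c s) = c (min (1 - r + s) 1)"
  by (simp add: imp_def' c_ng c_ad)
lemma c_mul: "0 \<le> r \<Longrightarrow> r \<le> 1 \<Longrightarrow> 0 \<le> s \<Longrightarrow> s \<le> 1 \<Longrightarrow> mul (c r) (c s) = c (max (r + s - 1) 0)"
proof -
  assume a: "0 \<le> r" "r \<le> 1" "0 \<le> s" "s \<le> 1"
  have "mul (c r) (c s) = ng (c (min (1 - r + (1 - s)) 1))" using a by (simp add: mul_def' c_ng c_ad)
  also have "\<dots> = c (1 - min (1 - r + (1 - s)) 1)" using a by (simp add: c_ng)
  also have "1 - min (1 - r + (1 - s)) 1 = max (r + s - 1) 0" by (simp add: min_def max_def)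
  finally show ?thesis .
qed
lemma c_pw: "0 \<le> r \<Longrightarrow> r \<le> 1 \<Longrightarrow> pw (c r) n = c (max (of_nat n * r - (of_nat n - 1)) 0)"
proof (induction n)
  case 0 then show ?case by (simp add: c1)
next
  case (Suc n)
  define p where "p = max (of_nat n * r - (of_nat n - 1)) 0"
  have "of_nat n * r \<le> of_nat n" using mult_left_le[of r "of_nat n"] Suc.prems by simp
  then have p: "0 \<le> p" "p \<le> 1" by (auto simp: p_def max_def)
  have "pw (c r) (Suc n) = mul (c r) (c p)" using Suc by (simp add: p_def)
  also have "\<dots> = c (max (r + p - 1) 0)" using p Suc.prems by (simp add: c_mul)
  also have "max (r + p - 1) 0 = max (of_nat (Suc n) * r - (of_nat (Suc n) - 1)) 0"
    using Suc.prems by (simp add: p_def max_def algebra_simps)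
  finally show ?case .
qed

lemma c_notin_F:
  assumes F: "F \<in> Mx" and r: "0 \<le> r" "r < 1"
  shows "c r \<notin> F"
proof
  assume cr: "c r \<in> F"
  obtain n :: nat where n: "1 / (1 - r) < of_nat n" using reals_Archimedean2 by blast
  have "1 < of_nat n * (1 - r)" using n r by (simp add: divide_less_eq mult.commute)
  then have "max (of_nat n * r - (of_nat n - 1)) 0 = 0" by (simp add: max_def algebra_simps)
  then have "pw (c r) n = c 0" using r by (simp add: c_pw)
  moreover have "pw (c r) n \<in> F" using cr F Mx_filt filt_pw by blast
  ultimately show False using F Mx_z by simp
qed
lemma c_in_F_iff: "F \<in> Mx \<Longrightarrow> 0 \<le> r \<Longrightarrow> r \<le> 1 \<Longrightarrow> c r \<in> F \<longleftrightarrow> r = 1"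
  using c_notin_F[of F r] c1 filt_one Mx_filt by (cases "r < 1") auto
lemma c_imp_F: "F \<in> Mx \<Longrightarrow> 0 \<le> r \<Longrightarrow> r \<le> 1 \<Longrightarrow> 0 \<le> s \<Longrightarrow> s \<le> 1 \<Longrightarrow>
   imp (c r) (c s) \<in> F \<longleftrightarrow> r \<le> s"
  using c_in_F_iff[of F "min (1 - r + s) 1"] by (auto simp: c_imp min_def)
lemma c_le: "0 \<le> r \<Longrightarrow> r \<le> s \<Longrightarrow> s \<le> 1 \<Longrightarrow> le (c r) (c s)"
  by (simp add: le_imp_one c_imp min_def c1)

end

context pav begin

definition SS where "SS F a = {r. 0 \<le> r \<and> r \<le> 1 \<and> imp (c r) a \<in> F}"
definition hv where "hv F a = (if a \<in> A then Sup (real_of_rat ` SS F a) else 0)"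

lemma imp_c0[simp]: "a \<in> A \<Longrightarrow> imp (c 0) a = one" by simp
lemma imp_c1[simp]: "a \<in> A \<Longrightarrow> imp (c 1) a = a" by (simp add: c1)

lemma SS_0: "F \<in> Mx \<Longrightarrow> a \<in> A \<Longrightarrow> 0 \<in> SS F a"
  using filt_one Mx_filt by (simp add: SS_def)
lemma SS_bdd: "bdd_above (real_of_rat ` SS F a)"
  by (rule bdd_aboveI[of _ 1]) (auto simp: SS_def)
lemma hv_ge: "F \<in> Mx \<Longrightarrow> a \<in> A \<Longrightarrow> r \<in> SS F a \<Longrightarrow> of_rat r \<le> hv F a"
  unfolding hv_def using SS_bdd by (simp add: cSup_upper)
lemma hv_le1: "F \<in> Mx \<Longrightarrow> hv F a \<le> 1"
  unfolding hv_def using SS_0[of F a] by (auto intro!: cSup_least simp: SS_def)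
lemma hv_ge0: "F \<in> Mx \<Longrightarrow> 0 \<le> hv F a"
  using hv_ge[OF _ _ SS_0, of F a] by (auto simp: hv_def)
lemma hv_exists: "F \<in> Mx \<Longrightarrow> a \<in> A \<Longrightarrow> x < hv F a \<Longrightarrow> \<exists>s\<in>SS F a. x < of_rat s"
  unfolding hv_def using SS_0[of F a] SS_bdd less_cSup_iff[of "real_of_rat ` SS F a" x] by auto

lemma SS_down: "F \<in> Mx \<Longrightarrow> a \<in> A \<Longrightarrow> r \<in> SS F a \<Longrightarrow> 0 \<le> r' \<Longrightarrow> r' \<le> r \<Longrightarrow> r' \<in> SS F a"
proof -
  assume a: "F \<in> Mx" "a \<in> A" "r \<in> SS F a" "0 \<le> r'" "r' \<le> r"
  then have r: "0 \<le> r" "r \<le> 1" "imp (c r) a \<in> F" by (auto simp: SS_def)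
  have "le (c r') (c r)" using a r by (simp add: c_le)
  then have "le (imp (c r) a) (imp (c r') a)" using a r by (simp add: imp_anti1)
  then have "imp (c r') a \<in> F" using r a filt_up2[OF Mx_filt[OF a(1)] r(3)] by simp
  then show ?thesis using a r by (simp add: SS_def)
qed

lemma imp_c_ng: "a \<in> A \<Longrightarrow> 0 \<le> s \<Longrightarrow> s \<le> 1 \<Longrightarrow> imp (c s) (ng a) = imp a (c (1 - s))"
  using imp_contra[of a "c (1 - s)"] by (simp add: c_ng)

lemma hv_sum:
  assumes F: "F \<in> Mx" and a: "a \<in> A"
  shows "hv F a + hv F (ng a) = 1"
proof -
  have fF: "filt F" using F Mx_filt by blast
  have rs: "r + s \<le> 1" if r: "r \<in> SS F a" and s: "s \<in> SS F (ng a)" for r s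
  proof -
    have r': "0 \<le> r" "r \<le> 1" "imp (c r) a \<in> F" using r by (auto simp: SS_def)
    have s': "0 \<le> s" "s \<le> 1" "imp a (c (1 - s)) \<in> F" using s a by (auto simp: SS_def imp_c_ng)
    have "mul (imp (c r) a) (imp a (c (1 - s))) \<in> F" using r' s' fF filt_mul by blast
    moreover have "le (mul (imp (c r) a) (imp a (c (1 - s)))) (imp (c r) (c (1 - s)))"
      using r' s' a by (simp add: imp_trans)
    ultimately have "imp (c r) (c (1 - s)) \<in> F" by (rule filt_up2[OF fF]) (use r' s' in simp)
    then have "r \<le> 1 - s" using c_imp_F[OF F] r' s' by simp
    then show ?thesis by simp
  qed
  have le1: "hv F a + hv F (ng a) \<le> 1"
  proof -
    have "of_rat s \<le> 1 - hv F a" if s: "s \<in> SS F (ng a)" for s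
    proof -
      have "(of_rat r::real) \<le> 1 - of_rat s" if "r \<in> SS F a" for r
      proof -
        have "r + s \<le> 1" by (rule rs[OF that s])
        then have "(of_rat (r + s)::real) \<le> 1" by simp
        then show ?thesis unfolding of_rat_add by linarith
      qed
      then have "hv F a \<le> 1 - of_rat s" unfolding hv_def using a SS_0[OF F a]
        by (auto intro!: cSup_least)
      then show ?thesis by simp
    qed
    then have "hv F (ng a) \<le> 1 - hv F a" unfolding hv_def[of F "ng a"] using a SS_0[OF F, of "ng a"]
      by (auto intro!: cSup_least)
    then show ?thesis by simp
  qed
  have ge1: "1 \<le> hv F a + hv F (ng a)"
  proof (rule ccontr)
    assume "\<not> 1 \<le> hv F a + hv F (ng a)"
    then have "hv F a < 1 - hv F (ng a)" by simp
    then obtain r :: rat where r: "hv F a < of_rat r" "of_rat r < 1 - hv F (ng a)"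
      using rat_dense_open by blast
    have "(0::real) \<le> of_rat r" "(of_rat r::real) \<le> 1" using r hv_ge0[OF F, of a] hv_ge0[OF F, of "ng a"] by linarith+
    then have r01: "0 \<le> r" "r \<le> 1" by simp_all
    show False
    proof (cases "imp (c r) a \<in> F")
      case True
      then have "r \<in> SS F a" using r01 by (simp add: SS_def)
      then show False using hv_ge[OF F a] r by fastforce
    next
      case False
      then have "imp a (c r) \<in> F" using max_prime[OF F, of "c r" a] r01 a by simp
      then have "1 - r \<in> SS F (ng a)" using r01 a imp_c_ng[of a "1 - r"] by (simp add: SS_def)
      then have "of_rat (1 - r) \<le> hv F (ng a)" using hv_ge[OF F] a by simp
      then show False using r by (simp add: of_rat_diff)
    qed
  qed
  show ?thesis using le1 ge1 by simp
qed

lemma hv_K: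
  assumes F: "F \<in> Mx" and a: "a \<in> A" and r: "0 \<le> r" "r \<le> 1"
  shows "imp (c r) a \<in> F \<longleftrightarrow> of_rat r \<le> hv F a"
proof
  assume "imp (c r) a \<in> F"
  then show "of_rat r \<le> hv F a" using hv_ge[OF F a] r by (simp add: SS_def)
next
  assume rh: "of_rat r \<le> hv F a"
  have fF: "filt F" using F Mx_filt by blast
  show "imp (c r) a \<in> F"
  proof (rule ccontr)
    define b where "b = imp (c r) a"
    have b: "b \<in> A" using a r by (simp add: b_def)
    assume "imp (c r) a \<notin> F"
    then have "b \<notin> F" by (simp add: b_def)
    then obtain n where n: "ng (pw b n) \<in> F" using max_M2[OF F b] by blast
    define d :: rat where "d = 1 / (2 * (of_nat n + 1))"
    define t where "t = 1 - d"
    have d: "0 < d" "d \<le> 1/2" by (auto simp: d_def field_simps)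
    have t: "0 \<le> t" "t \<le> 1" "t < 1" using d by (auto simp: t_def)
    consider "imp (c t) b \<in> F" | "imp b (c t) \<in> F" using max_prime[OF F, of "c t" b] t b by auto
    then show False
    proof cases
      case 1
      have "pw (imp (c t) b) n \<in> F" using 1 fF filt_pw by blast
      moreover have "le (pw (imp (c t) b) n) (imp (pw (c t) n) (pw b n))" using t b by (simp add: pw_imp)
      ultimately have i1: "imp (pw (c t) n) (pw b n) \<in> F" by (rule filt_up2[OF fF]) (use t b in simp)
      have i2: "imp (pw b n) (c 0) \<in> F" using n b by simp
      have "mul (imp (pw (c t) n) (pw b n)) (imp (pw b n) (c 0)) \<in> F" using i1 i2 fF filt_mul by blast
      moreover have "le (mul (imp (pw (c t) n) (pw b n)) (imp (pw b n) (c 0))) (imp (pw (c t) n) (c 0))"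
        using t b imp_trans[of "pw (c t) n" "pw b n" "c 0"] by simp
      ultimately have "imp (pw (c t) n) (c 0) \<in> F" by (rule filt_up2[OF fF]) (use t b in simp)
      then have ng_in_F: "ng (pw (c t) n) \<in> F" using t by simp
      define p where "p = max (of_nat n * t - (of_nat n - 1)) 0"
      have pe: "p = 1 - of_nat n * d" using d unfolding p_def t_def d_def
        by (auto simp: max_def field_simps)
      have "of_nat n * d < 1" unfolding d_def by (simp add: field_simps)
      then have p: "0 < p" "p \<le> 1" using pe d by auto
      have "ng (pw (c t) n) = c (1 - p)" using t p by (simp add: c_pw c_ng p_def)
      then have "c (1 - p) \<in> F" using ng_in_F by simp
      then show False using c_notin_F[OF F, of "1 - p"] p by simp
    next
      case 2
      have "(0::real) < of_rat d" using d by simp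
      then have "of_rat (r - d) < hv F a" unfolding of_rat_diff using rh by linarith
      then obtain s where s: "s \<in> SS F a" "of_rat (r - d) < (of_rat s::real)" using hv_exists[OF F a] by blast
      then have s': "0 \<le> s" "s \<le> 1" "imp (c s) a \<in> F" "r - d < s" by (auto simp: SS_def of_rat_less)
      define q where "q = min (1 - r + s) 1"
      have q: "0 \<le> q" "q \<le> 1" using r s' by (auto simp: q_def)
      have cq: "imp (c r) (c s) = c q" using r s' by (simp add: c_imp q_def)
      have "le (mul (c q) (imp (c s) a)) b" using imp_trans[of "c r" "c s" a] r s' a cq by (simp add: b_def)
      then have "le (mul (mul (c q) (imp (c s) a)) (imp b (c t))) (mul b (imp b (c t)))"
        using q s' t b a by (simp add: mul_mono)
      moreover have "le (mul b (imp b (c t))) (c t)" using b t by (simp add: mp)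
      ultimately have "le (mul (mul (c q) (imp (c s) a)) (imp b (c t))) (c t)"
        using q s' t b a le_trans[of "mul (mul (c q) (imp (c s) a)) (imp b (c t))" "mul b (imp b (c t))" "c t"]
        by simp
      moreover have "mul (mul (c q) (imp (c s) a)) (imp b (c t)) = mul (mul (imp (c s) a) (imp b (c t))) (c q)"
        using q s' t b a by (simp add: mul_assoc[of "c q"] mul_comm[of "c q" "mul (imp (c s) a) (imp b (c t))"])
      ultimately have "le (mul (mul (imp (c s) a) (imp b (c t))) (c q)) (c t)" by simp
      then have "le (mul (imp (c s) a) (imp b (c t))) (imp (c q) (c t))"
        using q s' t b a resid[of "mul (imp (c s) a) (imp b (c t))" "c q" "c t"] by simp
      moreover have "mul (imp (c s) a) (imp b (c t)) \<in> F" using s' 2 fF filt_mul by blast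
      ultimately have "imp (c q) (c t) \<in> F" using filt_up2[OF fF] q t by simp
      then have "q \<le> t" using c_imp_F[OF F] q t by simp
      then show False using s' t unfolding q_def t_def by (auto simp: min_def split: if_splits)
    qed
  qed
qed

lemma hv_ng: "F \<in> Mx \<Longrightarrow> a \<in> A \<Longrightarrow> hv F (ng a) = 1 - hv F a"
  using hv_sum by (simp add: algebra_simps)

lemma hv_one_iff: "F \<in> Mx \<Longrightarrow> a \<in> A \<Longrightarrow> a \<in> F \<longleftrightarrow> hv F a = 1"
  using hv_K[of F a 1] hv_le1[of F a] by auto

lemma hv_c: "F \<in> Mx \<Longrightarrow> 0 \<le> q \<Longrightarrow> q \<le> 1 \<Longrightarrow> hv F (c q) = of_rat q"
proof -
  assume F: "F \<in> Mx" and q: "0 \<le> q" "q \<le> 1"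
  show ?thesis
  proof (rule dens_eq)
    show "hv F (c q) \<in> {0..1}" using hv_ge0[OF F] hv_le1[OF F] by auto
    show "real_of_rat q \<in> {0..1}" using q by auto
    fix r :: rat assume r: "0 \<le> r" "r \<le> 1"
    have "of_rat r \<le> hv F (c q) \<longleftrightarrow> imp (c r) (c q) \<in> F" using hv_K[OF F _ r, of "c q"] q by simp
    also have "\<dots> \<longleftrightarrow> r \<le> q" using c_imp_F[OF F r q] by simp
    finally show "of_rat r \<le> hv F (c q) \<longleftrightarrow> of_rat r \<le> real_of_rat q" by (simp add: of_rat_less_eq)
  qed
qed

end

context pav begin

lemma hv_mul_ge:
  assumes F: "F \<in> Mx" and a: "a \<in> A" and b: "b \<in> A"
  shows "hv F a + hv F b - 1 \<le> hv F (mul a b)"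
proof (rule ccontr)
  assume "\<not> ?thesis"
  then have lt: "hv F (mul a b) < hv F a + hv F b - 1" by simp
  define e where "e = (hv F a + hv F b - 1 - hv F (mul a b)) / 2"
  have e: "e > 0" using lt by (simp add: e_def)
  have e2: "2 * e = hv F a + hv F b - 1 - hv F (mul a b)" by (simp add: e_def)
  obtain r where r: "0 \<le> r" "r \<le> 1" "of_rat r \<le> hv F a" "hv F a - e < of_rat r"
    using rat_below[OF hv_ge0[OF F] hv_le1[OF F] e] by blast
  obtain s where s: "0 \<le> s" "s \<le> 1" "of_rat s \<le> hv F b" "hv F b - e < of_rat s"
    using rat_below[OF hv_ge0[OF F] hv_le1[OF F] e] by blast
  have fF: "filt F" using F Mx_filt by blast
  have "imp (c r) a \<in> F" "imp (c s) b \<in> F" using hv_K[OF F] a b r s by auto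
  then have "mul (imp (c r) a) (imp (c s) b) \<in> F" using fF filt_mul by blast
  moreover have "le (mul (imp (c r) a) (imp (c s) b)) (imp (mul (c r) (c s)) (mul a b))"
    using a b r s by (simp add: I2)
  ultimately have "imp (mul (c r) (c s)) (mul a b) \<in> F" using filt_up2[OF fF] a b r s by simp
  then have "imp (c (max (r + s - 1) 0)) (mul a b) \<in> F" using r s by (simp add: c_mul)
  then have "of_rat (max (r + s - 1) 0) \<le> hv F (mul a b)" using hv_K[OF F] a b r s by simp
  moreover have "of_rat (r + s - 1) \<le> (of_rat (max (r + s - 1) 0) :: real)" by (simp add: of_rat_less_eq)
  ultimately have "of_rat r + of_rat s - 1 \<le> hv F (mul a b)" by (simp add: of_rat_add of_rat_diff)
  then show False using r s e2 by linarith
qed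

lemma hv_ad_ge:
  assumes F: "F \<in> Mx" and a: "a \<in> A" and b: "b \<in> A"
  shows "min (hv F a + hv F b) 1 \<le> hv F (ad a b)"
proof (rule ccontr)
  assume "\<not> ?thesis"
  then have lt: "hv F (ad a b) < min (hv F a + hv F b) 1" using not_le by blast
  define e where "e = (min (hv F a + hv F b) 1 - hv F (ad a b)) / 2"
  have e: "e > 0" using lt by (simp add: e_def)
  have e2: "2 * e = min (hv F a + hv F b) 1 - hv F (ad a b)" by (simp add: e_def)
  obtain r where r: "0 \<le> r" "r \<le> 1" "of_rat r \<le> hv F a" "hv F a - e < of_rat r"
    using rat_below[OF hv_ge0[OF F] hv_le1[OF F] e] by blast
  obtain s where s: "0 \<le> s" "s \<le> 1" "of_rat s \<le> hv F b" "hv F b - e < of_rat s"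
    using rat_below[OF hv_ge0[OF F] hv_le1[OF F] e] by blast
  have fF: "filt F" using F Mx_filt by blast
  have "imp (c r) a \<in> F" "imp (c s) b \<in> F" using hv_K[OF F] a b r s by auto
  then have "mul (imp (c r) a) (imp (c s) b) \<in> F" using fF filt_mul by blast
  moreover have "le (mul (imp (c r) a) (imp (c s) b)) (imp (ad (c r) (c s)) (ad a b))"
    using a b r s by (simp add: I1)
  ultimately have "imp (ad (c r) (c s)) (ad a b) \<in> F" using filt_up2[OF fF] a b r s by simp
  then have "imp (c (min (r + s) 1)) (ad a b) \<in> F" using r s by (simp add: c_ad)
  then have h: "of_rat (min (r + s) 1) \<le> hv F (ad a b)" using hv_K[OF F] a b r s by simp
  have "min (of_rat r + of_rat s) 1 \<le> hv F (ad a b)"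
  proof (cases "r + s \<le> 1")
    case True then show ?thesis using h by (simp add: of_rat_add min_def)
  next
    case False then show ?thesis using h by (simp add: min_def)
  qed
  then show False using r s e2 e lt by (simp add: min_def split: if_splits; linarith)
qed

lemma hv_ad: "F \<in> Mx \<Longrightarrow> a \<in> A \<Longrightarrow> b \<in> A \<Longrightarrow> hv F (ad a b) = min (hv F a + hv F b) 1"
proof -
  assume F: "F \<in> Mx" and a: "a \<in> A" and b: "b \<in> A"
  have e: "ad a b = ng (mul (ng a) (ng b))" using a b by (simp add: ng_mul)
  have "hv F (ad a b) = 1 - hv F (mul (ng a) (ng b))" using e F a b by (simp add: hv_ng)
  moreover have "hv F (ng a) + hv F (ng b) - 1 \<le> hv F (mul (ng a) (ng b))" using hv_mul_ge F a b by simp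
  ultimately have "hv F (ad a b) \<le> hv F a + hv F b" using F a b by (simp add: hv_ng)
  then show ?thesis using hv_ad_ge[OF F a b] hv_le1[OF F, of "ad a b"] by linarith
qed

lemma hv_hom: "F \<in> Mx \<Longrightarrow> mv_hom_unit A ad ng (c 0) (hv F)"
proof -
  assume F: "F \<in> Mx"
  have "\<forall>x. x \<notin> A \<longrightarrow> hv F x = 0" by (simp add: hv_def)
  then show ?thesis unfolding mv_hom_unit_def
    using hv_ge0[OF F] hv_le1[OF F] hv_ad[OF F] hv_ng[OF F] hv_c[OF F, of 0] by simp
qed

lemma hom_c_aux:
  assumes h: "mv_hom_unit A ad ng (c 0) h" and q: "0 < q"
  shows "k \<le> q \<Longrightarrow> h (c (of_nat k / of_nat q)) = min (of_nat k * h (c (1 / of_nat q))) 1"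
proof (induction k)
  case 0
  then show ?case using h by (simp add: mv_hom_unit_def)
next
  case (Suc k)
  have q1: "(1::rat) / of_nat q \<le> 1" "0 \<le> (1::rat) / of_nat q" using q by (auto simp: field_simps)
  have qk: "(of_nat k::rat) / of_nat q \<le> 1" "0 \<le> (of_nat k::rat) / of_nat q" using q Suc.prems by (auto simp: field_simps)
  have "ad (c (1 / of_nat q)) (c (of_nat k / of_nat q)) = c (min (1 / of_nat q + of_nat k / of_nat q) 1)"
    using q1 qk by (simp add: c_ad)
  also have "min (1 / of_nat q + of_nat k / of_nat q) 1 = (of_nat (Suc k) / of_nat q :: rat)"
    using q Suc.prems by (simp add: field_simps min_def)
  finally have e: "c (of_nat (Suc k) / of_nat q) = ad (c (1 / of_nat q)) (c (of_nat k / of_nat q))" by simp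
  have u0: "0 \<le> h (c (1 / of_nat q))" using h q1 by (simp add: mv_hom_unit_def)
  have "h (c (of_nat (Suc k) / of_nat q)) = min (h (c (1 / of_nat q)) + h (c (of_nat k / of_nat q))) 1"
    using e h q1 qk by (simp add: mv_hom_unit_def)
  also have "\<dots> = min (of_nat (Suc k) * h (c (1 / of_nat q))) 1"
    using Suc u0 by (simp add: min_def algebra_simps)
  finally show ?case .
qed

lemma hom_c:
  assumes h: "mv_hom_unit A ad ng (c 0) h" and r: "0 \<le> r" "r \<le> 1"
  shows "h (c r) = of_rat r"
proof -
  obtain p d where pd: "quotient_of r = (p, d)" by (cases "quotient_of r") auto
  have rpd: "r = of_int p / of_int d" using quotient_of_div[OF pd] .
  have d: "0 < d" using quotient_of_denom_pos[OF pd] .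
  have p: "0 \<le> p" using r rpd d by (simp add: zero_le_divide_iff)
  define q where "q = nat d"
  define k where "k = nat p"
  have qpos: "0 < q" using d by (simp add: q_def)
  have rkq: "r = of_nat k / of_nat q" using rpd p d by (simp add: k_def q_def)
  have kq: "k \<le> q" using r rkq qpos by (simp add: field_simps)
  define u where "u = h (c (1 / of_nat q))"
  have h1: "h (c 1) = 1" using h c1 by (simp add: mv_hom_unit_def)
  have "min (of_nat q * u) 1 = 1" using hom_c_aux[OF h qpos, of q] qpos h1 by (simp add: u_def)
  then have qu: "1 \<le> of_nat q * u" by (simp add: min_def split: if_splits)
  have q1: "(1::rat) / of_nat q \<le> 1" "0 \<le> (1::rat) / of_nat q" using qpos by (auto simp: field_simps)
  have "ng (c (1 / of_nat q)) = c (1 - 1 / of_nat q)" using q1 by (simp add: c_ng)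
  also have "(1 - 1 / of_nat q :: rat) = of_nat (q - 1) / of_nat q" using qpos by (simp add: field_simps of_nat_diff)
  finally have eqn: "ng (c (1 / of_nat q)) = c (of_nat (q - 1) / of_nat q)" .
  have "h (ng (c (1 / of_nat q))) = 1 - u" using h q1 by (simp add: mv_hom_unit_def u_def)
  then have "h (c (of_nat (q - 1) / of_nat q)) = 1 - u" by (simp only: eqn)
  then have e: "min (of_nat (q - 1) * u) 1 = 1 - u" using hom_c_aux[OF h qpos, of "q - 1"] by (simp add: u_def)
  have u0: "0 \<le> u" using h q1 by (simp add: mv_hom_unit_def u_def)
  have "u = 1 / of_nat q"
  proof (cases "1 \<le> of_nat (q - 1) * u")
    case True
    have "min (of_nat (q - 1) * u) 1 = 1" using min_absorb2[OF True] .
    then have "u = 0" using e by linarith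
    then show ?thesis using True by simp
  next
    case False
    then have "of_nat (q - 1) * u = 1 - u" using e by (simp add: min_def)
    then have "of_nat q * u = 1" using qpos by (simp add: of_nat_diff algebra_simps)
    then show ?thesis using qpos by (simp add: field_simps)
  qed
  then have "h (c r) = min (of_nat k * (1 / of_nat q)) 1" using hom_c_aux[OF h qpos kq] rkq by (simp add: u_def)
  also have "\<dots> = of_nat k / of_nat q" using kq qpos by (simp add: min_def field_simps)
  also have "\<dots> = of_rat r" using rkq by (simp add: of_rat_divide)
  finally show ?thesis .
qed

lemma hom_unique:
  assumes F: "F \<in> Mx" and h: "mv_hom_unit A ad ng (c 0) h" and k: "\<forall>y\<in>A. h y = 1 \<longleftrightarrow> y \<in> F"
  shows "h = hv F"
proof
  fix a
  show "h a = hv F a"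
  proof (cases "a \<in> A")
    case False then show ?thesis using h by (simp add: mv_hom_unit_def hv_def)
  next
    case a: True
    show ?thesis
    proof (rule dens_eq)
      show "h a \<in> {0..1}" using h a by (simp add: mv_hom_unit_def)
      show "hv F a \<in> {0..1}" using hv_ge0[OF F] hv_le1[OF F] by simp
      fix r :: rat assume r: "0 \<le> r" "r \<le> 1"
      have "h (imp (c r) a) = min (1 - of_rat r + h a) 1"
        using h a r hom_c[OF h r] by (simp add: imp_def' mv_hom_unit_def)
      then have "of_rat r \<le> h a \<longleftrightarrow> h (imp (c r) a) = 1" by (auto simp: min_def)
      also have "\<dots> \<longleftrightarrow> imp (c r) a \<in> F" using k a r by simp
      also have "\<dots> \<longleftrightarrow> of_rat r \<le> hv F a" using hv_K[OF F a r] .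
      finally show "of_rat r \<le> h a \<longleftrightarrow> of_rat r \<le> hv F a" .
    qed
  qed
qed

lemma qv_eq: "F \<in> Mx \<Longrightarrow> quot_val A ad ng (c 0) F x = hv F x"
proof -
  assume F: "F \<in> Mx"
  have P: "mv_hom_unit A ad ng (c 0) (hv F) \<and> (\<forall>y\<in>A. hv F y = 1 \<longleftrightarrow> y \<in> F)"
    using hv_hom[OF F] hv_one_iff[OF F] by simp
  have "(THE h. mv_hom_unit A ad ng (c 0) h \<and> (\<forall>y\<in>A. h y = 1 \<longleftrightarrow> y \<in> F)) = hv F"
    by (rule the_equality) (use P hom_unique[OF F] in auto)
  then show ?thesis by (simp add: quot_val_def)
qed

end

lemma luk_le1: "luk_imp x y \<le> 1" by (simp add: luk_imp_def)
lemma luk_ge0: "x \<le> 1 \<Longrightarrow> 0 \<le> y \<Longrightarrow> 0 \<le> luk_imp x y" by (simp add: luk_imp_def)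

context pav begin

lemma hv_in: "F \<in> Mx \<Longrightarrow> hv F a \<in> {0..1}" using hv_ge0 hv_le1 by simp
lemma hv_mul: "F \<in> Mx \<Longrightarrow> a \<in> A \<Longrightarrow> b \<in> A \<Longrightarrow> hv F (mul a b) = max (hv F a + hv F b - 1) 0"
proof -
  assume F: "F \<in> Mx" and a: "a \<in> A" and b: "b \<in> A"
  have "hv F (mul a b) = 1 - hv F (ad (ng a) (ng b))" using F a b by (simp add: mul_def' hv_ng)
  also have "\<dots> = 1 - min (1 - hv F a + (1 - hv F b)) 1" using F a b by (simp add: hv_ad hv_ng)
  also have "\<dots> = max (hv F a + hv F b - 1) 0" by (simp add: min_def max_def)
  finally show ?thesis .
qed
lemma hv_imp: "F \<in> Mx \<Longrightarrow> a \<in> A \<Longrightarrow> b \<in> A \<Longrightarrow> hv F (imp a b) = min (1 - hv F a + hv F b) 1"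
  by (simp add: imp_def' hv_ad hv_ng)
lemma hv_le: "F \<in> Mx \<Longrightarrow> a \<in> A \<Longrightarrow> b \<in> A \<Longrightarrow> le a b \<Longrightarrow> hv F a \<le> hv F b"
proof -
  assume F: "F \<in> Mx" and a: "a \<in> A" and b: "b \<in> A" and l: "le a b"
  have "imp a b = one" using l a b le_imp_one by simp
  then have "hv F (imp a b) = 1" using F hv_c[OF F, of 1] by (simp add: c1)
  then show ?thesis using F a b by (simp add: hv_imp min_def split: if_splits)
qed
lemma hv_imp_c_F: "F \<in> Mx \<Longrightarrow> b \<in> A \<Longrightarrow> 0 \<le> s \<Longrightarrow> s \<le> 1 \<Longrightarrow> imp b (c s) \<in> F \<Longrightarrow> hv F b \<le> of_rat s"
proof -
  assume F: "F \<in> Mx" and b: "b \<in> A" and s: "0 \<le> s" "s \<le> 1" and i: "imp b (c s) \<in> F"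
  have "hv F (imp b (c s)) = 1" using hv_one_iff[OF F] i b s by simp
  then show ?thesis using F b s by (simp add: hv_imp hv_c min_def split: if_splits)
qed

definition Rel where "Rel K F F' = (INF a\<in>A. luk_imp (hv F' (K a)) (hv F a))"

lemma A_ne: "A \<noteq> {}" using z_in by blast

lemma Rel_lower: "F \<in> Mx \<Longrightarrow> F' \<in> Mx \<Longrightarrow> a \<in> A \<Longrightarrow> Rel K F F' \<le> luk_imp (hv F' (K a)) (hv F a)"
  unfolding Rel_def
  by (rule cINF_lower) (auto intro!: bdd_belowI[of _ 0] luk_ge0 hv_le1 hv_ge0)
lemma Rel_greatest: "(\<And>a. a \<in> A \<Longrightarrow> x \<le> luk_imp (hv F' (K a)) (hv F a)) \<Longrightarrow> x \<le> Rel K F F'"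
  unfolding Rel_def by (rule cINF_greatest[OF A_ne])
lemma Rel_le1: "F \<in> Mx \<Longrightarrow> F' \<in> Mx \<Longrightarrow> Rel K F F' \<le> 1"
proof -
  assume F: "F \<in> Mx" and F': "F' \<in> Mx"
  have "Rel K F F' \<le> luk_imp (hv F' (K (c 0))) (hv F (c 0))" using Rel_lower[OF F F' z_in] .
  also have "\<dots> \<le> 1" by (rule luk_le1)
  finally show ?thesis .
qed
lemma Rel_ge0: "F \<in> Mx \<Longrightarrow> F' \<in> Mx \<Longrightarrow> 0 \<le> Rel K F F'"
  by (rule Rel_greatest) (auto intro!: luk_ge0 hv_le1 hv_ge0)
lemma Rel_less: "F \<in> Mx \<Longrightarrow> F' \<in> Mx \<Longrightarrow> Rel K F F' < x \<Longrightarrow> \<exists>a\<in>A. luk_imp (hv F' (K a)) (hv F a) < x"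
  unfolding Rel_def using A_ne
  by (subst (asm) cINF_less_iff) (auto intro!: bdd_belowI[of _ 0] luk_ge0 hv_le1 hv_ge0)

lemma time_rel_eq: "F \<in> Mx \<Longrightarrow> F' \<in> Mx \<Longrightarrow> time_rel A ad ng (c 0) K F F' = Rel K F F'"
  unfolding time_rel_def Rel_def by (simp add: qv_eq)

lemma ss_le_gen:
  assumes ss: "mv_semisimple A ad ng (c 0)" and a: "a \<in> A" and b: "b \<in> A"
    and h: "\<And>F. F \<in> Mx \<Longrightarrow> hv F a \<le> hv F b"
  shows "le a b"
proof (rule ccontr)
  assume "\<not> le a b"
  then have ne: "imp a b \<noteq> one" using a b le_imp_one by simp
  have "imp a b \<notin> {x\<in>A. \<forall>F\<in>Mx. x \<in> F}" using ss ne by (simp add: mv_semisimple_def mv_one_def)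
  then obtain F where F: "F \<in> Mx" "imp a b \<notin> F" using a b by auto
  then have "hv F (imp a b) \<noteq> 1" using hv_one_iff a b by simp
  then have "hv F b < hv F a" using F a b by (simp add: hv_imp min_def split: if_splits)
  then show False using h[OF F(1)] by simp
qed

end

lemma tense_sym: "tense_pavelka A ad ng c G H \<Longrightarrow> tense_pavelka A ad ng c H G"
  unfolding tense_pavelka_def by blast

locale tp = pav A ad ng c
  for A :: "'a set" and ad ng c +
  fixes G H :: "'a \<Rightarrow> 'a"
  assumes tense: "tense_pavelka A ad ng c G H"
    and ss: "mv_semisimple A ad ng (c 0)"
begin

lemma G_in[simp]: "x \<in> A \<Longrightarrow> G x \<in> A" using tense by (simp add: tense_pavelka_def)
lemma H_in[simp]: "x \<in> A \<Longrightarrow> H x \<in> A" using tense by (simp add: tense_pavelka_def)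
lemma G_meet: "x \<in> A \<Longrightarrow> y \<in> A \<Longrightarrow> G (meet x y) = meet (G x) (G y)"
  using tense by (simp add: tense_pavelka_def)
lemma G_imp_c: "0 \<le> r \<Longrightarrow> r \<le> 1 \<Longrightarrow> x \<in> A \<Longrightarrow> G (imp (c r) x) = imp (c r) (G x)"
  using tense by (simp add: tense_pavelka_def)
lemma PT3: "x \<in> A \<Longrightarrow> le (ng (G (ng (H x)))) x"
  using tense by (simp add: tense_pavelka_def)
lemma PT3': "x \<in> A \<Longrightarrow> le (ng (H (ng (G x)))) x"
  using tense by (simp add: tense_pavelka_def)
lemma G_mono: "x \<in> A \<Longrightarrow> y \<in> A \<Longrightarrow> le x y \<Longrightarrow> le (G x) (G y)"
proof -
  assume a: "x \<in> A" "y \<in> A" "le x y"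
  have "G x = meet (G x) (G y)" using a G_meet[of x y] meet_eq[of x y] by simp
  then show ?thesis using a meet_lb2[of "G x" "G y"] by simp
qed
lemma G_one: "G one = one"
  using G_imp_c[of 0 one] by simp

lemma ss_le: "a \<in> A \<Longrightarrow> b \<in> A \<Longrightarrow> (\<And>F. F \<in> Mx \<Longrightarrow> hv F a \<le> hv F b) \<Longrightarrow> le a b"
  using ss_le_gen[OF ss] by blast

lemma Rel_sym_le:
  assumes F: "F \<in> Mx" and F': "F' \<in> Mx"
  shows "Rel G F F' \<le> Rel H F' F"
proof (rule Rel_greatest)
  fix b assume b: "b \<in> A"
  have "Rel G F F' \<le> luk_imp (hv F' (G (ng (H b)))) (hv F (ng (H b)))" using Rel_lower F F' b by simp
  also have "\<dots> \<le> luk_imp (hv F (H b)) (hv F' b)"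
  proof -
    have "hv F' (ng (G (ng (H b)))) \<le> hv F' b" using hv_le[OF F'] PT3[OF b] b by simp
    then show ?thesis using F F' b by (simp add: hv_ng luk_imp_def)
  qed
  finally show "Rel G F F' \<le> luk_imp (hv F (H b)) (hv F' b)" .
qed

end

lemma tp_sym: "tp A ad ng c G H \<Longrightarrow> tp A ad ng c H G"
  unfolding tp_def tp_axioms_def using tense_sym by blast

context tp begin
lemma Rel_sym: "F \<in> Mx \<Longrightarrow> F' \<in> Mx \<Longrightarrow> Rel G F F' = Rel H F' F"
proof -
  assume F: "F \<in> Mx" and F': "F' \<in> Mx"
  have "Rel G F F' \<le> Rel H F' F" by (rule Rel_sym_le[OF F F'])
  moreover have "Rel H F' F \<le> Rel G F F'" by (rule tp.Rel_sym_le[OF tp_sym[OF tp_axioms] F' F])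
  ultimately show ?thesis by simp
qed
end

context mv begin
lemma fin_comb:
  assumes fin: "finite I" and ex: "\<forall>i\<in>I. \<exists>a\<in>Phi. P i a" and one: "one \<in> Phi" and sub: "Phi \<subseteq> A"
    and mt: "\<And>a a'. a \<in> Phi \<Longrightarrow> a' \<in> Phi \<Longrightarrow> meet a a' \<in> Phi"
    and anti: "\<And>i a a'. P i a \<Longrightarrow> a \<in> Phi \<Longrightarrow> a' \<in> Phi \<Longrightarrow> le a' a \<Longrightarrow> P i a'"
  shows "\<exists>a\<in>Phi. \<forall>i\<in>I. P i a"
  using fin ex
proof (induction I rule: finite_induct)
  case empty then show ?case using one by blast
next
  case (insert j I)
  then obtain a where a: "a \<in> Phi" "\<forall>i\<in>I. P i a" by blast
  obtain b where b: "b \<in> Phi" "P j b" using insert by blast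
  have m: "meet a b \<in> Phi" using mt a b by blast
  have aA: "a \<in> A" "b \<in> A" using a b sub by auto
  have "P j (meet a b)" using anti[OF b(2) b(1) m] aA meet_lb2 by simp
  moreover have "\<forall>i\<in>I. P i (meet a b)" using anti a m aA meet_lb1 by blast
  ultimately show ?case using m by blast
qed
end

context tp begin

lemma Rel_ge_r:
  assumes F: "F \<in> Mx" and F': "F' \<in> Mx" and r: "0 \<le> r" "r \<le> 1"
    and h: "\<And>a. a \<in> A \<Longrightarrow> G a \<in> F' \<Longrightarrow> imp (c r) a \<in> F"
  shows "of_rat r \<le> Rel G F F'"
proof (rule Rel_greatest)
  fix a assume a: "a \<in> A"
  define u where "u = hv F' (G a)"
  define w where "w = hv F a"
  have u01: "0 \<le> u" "u \<le> 1" using hv_ge0[OF F'] hv_le1[OF F'] by (auto simp: u_def)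
  have w01: "0 \<le> w" "w \<le> 1" using hv_ge0[OF F] hv_le1[OF F] by (auto simp: w_def)
  have r1: "(of_rat r::real) \<le> 1" using r by simp
  show "of_rat r \<le> luk_imp (hv F' (G a)) (hv F a)"
  proof (rule ccontr)
    assume "\<not> ?thesis"
    then have lt: "1 - u + w < of_rat r" using r1 by (auto simp: luk_imp_def u_def w_def min_def split: if_splits)
    obtain s :: rat where s: "1 - of_rat r + w < of_rat s" "of_rat s < u" using rat_dense_open[of "1 - of_rat r + w" u] lt by auto
    have "(0::real) \<le> of_rat s" "(of_rat s::real) \<le> 1" using s r1 w01 u01 by linarith+
    then have s01: "0 \<le> s" "s \<le> 1" by simp_all
    have "imp (c s) (G a) \<in> F'" using hv_K[OF F' _ s01, of "G a"] a s by (simp add: u_def)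
    then have "G (imp (c s) a) \<in> F'" using G_imp_c[OF s01 a] by simp
    then have "imp (c r) (imp (c s) a) \<in> F" using h a s01 by simp
    then have "hv F (imp (c r) (imp (c s) a)) = 1" using hv_one_iff[OF F] a r s01 by simp
    moreover have "hv F (imp (c r) (imp (c s) a)) = min (1 - of_rat r + min (1 - of_rat s + w) 1) 1"
      using F a r s01 by (simp add: hv_imp hv_c w_def)
    moreover have ws: "w < of_rat s" using s r1 by linarith
    ultimately have "min (1 - of_rat r + (1 - of_rat s + w)) 1 = (1::real)" by (simp add: min_def)
    then have "1 \<le> 1 - of_rat r + (1 - of_rat s + w)" by (simp add: min_def split: if_splits)
    then show False using s by linarith
  qed
qed

lemma hard:
  assumes F': "F' \<in> Mx" and b: "b \<in> A" and uq: "hv F' (G b) < q"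
  shows "\<exists>F\<in>Mx. luk_imp (Rel G F F') (hv F b) < q"
proof (rule ccontr)
  assume "\<not> ?thesis"
  then have nq: "\<And>F. F \<in> Mx \<Longrightarrow> q \<le> luk_imp (Rel G F F') (hv F b)" by (auto simp: not_less)
  define u where "u = hv F' (G b)"
  have q1: "q \<le> 1" using nq[OF F'] luk_le1[of "Rel G F' F'" "hv F' b"] by linarith
  have u01: "0 \<le> u" "u \<le> 1" using hv_ge0[OF F'] hv_le1[OF F'] by (auto simp: u_def)
  obtain q' :: rat where q': "u < of_rat q'" "of_rat q' < q" using rat_dense_open uq by (auto simp: u_def)
  have "(0::real) \<le> of_rat q'" "(of_rat q'::real) \<le> 1" using q' u01 q1 by linarith+
  then have q'01: "0 \<le> q'" "q' \<le> 1" by simp_all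
  obtain K :: nat where K: "1 / (of_rat q' - u) < of_nat K" using reals_Archimedean2 by blast
  have "0 < 1 / (of_rat q' - u)" using q' by simp
  then have "(0::real) < of_nat K" using K by linarith
  then have Kpos: "0 < K" by simp
  define d :: rat where "d = 1 / of_nat K"
  have dreal: "(of_rat d::real) = 1 / real K" by (simp add: d_def of_rat_divide)
  have dlt: "(of_rat d::real) < of_rat q' - u"
  proof -
    have "0 < of_rat q' - u" using q' by simp
    then have "1 < (of_rat q' - u) * real K" using K by (simp add: divide_less_eq mult.commute)
    then show ?thesis using Kpos dreal by (simp add: divide_less_eq mult.commute)
  qed
  define q'' where "q'' = q' - d"
  have uq'': "u < of_rat q''" using dlt by (simp add: q''_def of_rat_diff)
  have d0: "(0::real) \<le> of_rat d" using dreal by simp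
  have q'1r: "(of_rat q'::real) \<le> 1" using q'01 by simp
  have "(0::real) \<le> of_rat q''" "(of_rat q''::real) \<le> 1" using uq'' u01 d0 q'1r unfolding q''_def of_rat_diff by linarith+
  then have q''01: "0 \<le> q''" "q'' \<le> 1" by simp_all
  define Phi where "Phi = {a\<in>A. G a \<in> F'}"
  have fF': "filt F'" using F' Mx_filt by blast
  have one_Phi: "one \<in> Phi" using G_one filt_one[OF fF'] by (simp add: Phi_def)
  have meet_Phi: "\<And>a a'. a \<in> Phi \<Longrightarrow> a' \<in> Phi \<Longrightarrow> meet a a' \<in> Phi"
    using G_meet filt_meet[OF fF'] by (auto simp: Phi_def)
  have Phi_A: "Phi \<subseteq> A" by (auto simp: Phi_def)
  define W where "W r s a = mul (imp (c r) a) (imp b (c s))" for r s a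
  have W_in: "\<And>r s a. 0 \<le> r \<Longrightarrow> r \<le> 1 \<Longrightarrow> 0 \<le> s \<Longrightarrow> s \<le> 1 \<Longrightarrow> a \<in> A \<Longrightarrow> W r s a \<in> A"
    using b by (simp add: W_def)
  have W_anti: "\<And>r s a a'. 0 \<le> r \<Longrightarrow> r \<le> 1 \<Longrightarrow> 0 \<le> s \<Longrightarrow> s \<le> 1 \<Longrightarrow> a \<in> A \<Longrightarrow> a' \<in> A \<Longrightarrow>
      le a' a \<Longrightarrow> le (W r s a') (W r s a)"
    using b by (simp add: W_def imp_mono2 mul_mono)
  have claim1: "\<exists>a\<in>Phi. \<forall>F\<in>Mx. W r s a \<notin> F"
    if r: "0 \<le> r" "r \<le> 1" and s: "0 \<le> s" "s \<le> 1" and rsq: "of_rat (1 - r + s) < q" for r s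
  proof -
    define Fil where "Fil = {x\<in>A. \<exists>a\<in>Phi. \<exists>N. le (pw (W r s a) N) x}"
    have fil: "filt Fil" unfolding mv_filter_def
    proof (intro conjI ballI impI)
      show "Fil \<subseteq> A" by (auto simp: Fil_def)
      show "mv_one ng (c 0) \<in> Fil" unfolding Fil_def mv_one_def using one_Phi
        by (auto intro!: bexI[of _ one] exI[of _ 0])
    next
      fix x y assume xy: "x \<in> Fil" "y \<in> Fil"
      then obtain a1 N1 a2 N2 where h: "a1 \<in> Phi" "le (pw (W r s a1) N1) x" "a2 \<in> Phi" "le (pw (W r s a2) N2) y"
        "x \<in> A" "y \<in> A" by (auto simp: Fil_def)
      define a where "a = meet a1 a2"
      have a: "a \<in> Phi" "a \<in> A" using meet_Phi h Phi_A by (auto simp: a_def)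
      have aA: "a1 \<in> A" "a2 \<in> A" using h Phi_A by auto
      have l1: "le (pw (W r s a) N1) (pw (W r s a1) N1)"
      proof -
        have "le (W r s a) (W r s a1)" using W_anti[OF r s aA(1) a(2)] meet_lb1[OF aA] by (simp add: a_def)
        then show ?thesis using pw_mono W_in r s a aA by simp
      qed
      have l2: "le (pw (W r s a) N2) (pw (W r s a2) N2)"
      proof -
        have "le (W r s a) (W r s a2)" using W_anti[OF r s aA(2) a(2)] meet_lb2[OF aA] by (simp add: a_def)
        then show ?thesis using pw_mono W_in r s a aA by simp
      qed
      have x1: "le (pw (W r s a) N1) x" using le_trans[OF _ _ _ l1 h(2)] W_in r s a aA h by simp
      have y1: "le (pw (W r s a) N2) y" using le_trans[OF _ _ _ l2 h(4)] W_in r s a aA h by simp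
      have "pw (W r s a) (N1 + N2) = mul (pw (W r s a) N1) (pw (W r s a) N2)" using W_in r s a by (simp add: pw_add)
      moreover have "le (mul (pw (W r s a) N1) (pw (W r s a) N2)) (mul x y)"
        using mul_mono2[OF _ _ _ _ x1 y1] W_in r s a h by simp
      ultimately have "le (pw (W r s a) (N1 + N2)) (mul x y)" by simp
      then show "mul x y \<in> Fil" unfolding Fil_def using a h mul_in by blast
    next
      fix x y assume xy: "x \<in> Fil" "y \<in> A" "le x y"
      then obtain a N where h: "a \<in> Phi" "le (pw (W r s a) N) x" "x \<in> A" by (auto simp: Fil_def)
      have "le (pw (W r s a) N) y" using le_trans[OF _ _ _ h(2) xy(3)] h xy W_in r s Phi_A by auto
      then show "y \<in> Fil" unfolding Fil_def using h xy by blast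
    qed
    show ?thesis
    proof (cases "c 0 \<in> Fil")
      case False
      obtain F where F: "F \<in> Mx" "Fil \<subseteq> F" using zorn_max[OF fil False] by blast
      have fF: "filt F" using F Mx_filt by blast
      have "imp (c r) a \<in> F" if a: "a \<in> A" "G a \<in> F'" for a
      proof -
        have aP: "a \<in> Phi" using a by (simp add: Phi_def)
        have "le (pw (W r s a) 1) (imp (c r) a)" using W_in r s a b by (simp add: W_def mul_le)
        moreover have "imp (c r) a \<in> A" using a r by simp
        ultimately have "imp (c r) a \<in> Fil" unfolding Fil_def using aP by blast
        then show ?thesis using F by blast
      qed
      then have Rr: "of_rat r \<le> Rel G F F'" using Rel_ge_r[OF F(1) F' r] by blast
      have "le (pw (W r s one) 1) (imp b (c s))" using b r s by (simp add: W_def)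
      moreover have "imp b (c s) \<in> A" using b s by simp
      ultimately have "imp b (c s) \<in> Fil" unfolding Fil_def using one_Phi by blast
      then have "imp b (c s) \<in> F" using F by blast
      then have bs: "hv F b \<le> of_rat s" using hv_imp_c_F[OF F(1) b s] by simp
      have "luk_imp (Rel G F F') (hv F b) \<le> 1 - Rel G F F' + hv F b" by (simp add: luk_imp_def)
      also have "\<dots> \<le> of_rat (1 - r + s)" using Rr bs by (simp add: of_rat_add of_rat_diff)
      finally show ?thesis using nq[OF F(1)] rsq by simp
    next
      case True
      then obtain a N where h: "a \<in> Phi" "le (pw (W r s a) N) (c 0)" by (auto simp: Fil_def)
      have "W r s a \<notin> F" if F: "F \<in> Mx" for F
      proof
        assume "W r s a \<in> F"
        then have "pw (W r s a) N \<in> F" using F Mx_filt filt_pw by blast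
        then have "c 0 \<in> F" using filt_up2[OF Mx_filt[OF F] _ h(2)] by simp
        then show False using Mx_z F by simp
      qed
      then show ?thesis using h by blast
    qed
  qed
  define rr where "rr i = of_nat i * d" for i :: nat
  define sr where "sr i = rr i - 1 + q'" for i :: nat
  define I where "I = {i. i \<le> K \<and> 0 \<le> sr i}"
  have rr_real: "(of_rat (rr i)::real) = real i / real K" for i by (simp add: rr_def of_rat_mult dreal)
  have rr01: "0 \<le> rr i" "rr i \<le> 1" if "i \<le> K" for i
    using that Kpos by (auto simp: rr_def d_def field_simps)
  have sr01: "0 \<le> sr i" "sr i \<le> 1" if "i \<in> I" for i
  proof -
    have "i \<le> K" "0 \<le> sr i" using that by (auto simp: I_def)
    then show "0 \<le> sr i" "sr i \<le> 1" using rr01[of i] q'01 by (auto simp: sr_def)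
  qed
  have "\<exists>a\<in>Phi. \<forall>i\<in>I. (i \<in> I \<longrightarrow> (\<forall>F\<in>Mx. W (rr i) (sr i) a \<notin> F))"
  proof (rule fin_comb[OF _ _ one_Phi Phi_A meet_Phi])
    show "finite I" by (rule finite_subset[of _ "{..K}"]) (auto simp: I_def)
    show "\<forall>i\<in>I. \<exists>a\<in>Phi. (i \<in> I \<longrightarrow> (\<forall>F\<in>Mx. W (rr i) (sr i) a \<notin> F))"
    proof
      fix i assume i: "i \<in> I"
      have "1 - rr i + sr i = q'" by (simp add: sr_def)
      then show "\<exists>a\<in>Phi. (i \<in> I \<longrightarrow> (\<forall>F\<in>Mx. W (rr i) (sr i) a \<notin> F))"
        using claim1[of "rr i" "sr i"] rr01[of i] sr01[OF i] i q' by (auto simp: I_def)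
    qed
    fix i a a' assume h: "i \<in> I \<longrightarrow> (\<forall>F\<in>Mx. W (rr i) (sr i) a \<notin> F)" "a \<in> Phi" "a' \<in> Phi" "le a' a"
    show "i \<in> I \<longrightarrow> (\<forall>F\<in>Mx. W (rr i) (sr i) a' \<notin> F)"
    proof (intro impI ballI notI)
      fix F assume True: "i \<in> I" and F: "F \<in> Mx" "W (rr i) (sr i) a' \<in> F"
      have iK: "i \<le> K" using True by (simp add: I_def)
      have aA: "a \<in> A" "a' \<in> A" using h Phi_A by auto
      have "le (W (rr i) (sr i) a') (W (rr i) (sr i) a)"
        using W_anti[OF rr01[OF iK] sr01[OF True] aA h(4)] .
      then have "W (rr i) (sr i) a \<in> F"
        using filt_up2[OF Mx_filt[OF F(1)] F(2)] W_in[OF rr01[OF iK] sr01[OF True] aA(1)] by simp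
      then show False using h F True by blast
    qed
  qed
  then obtain a where a: "a \<in> Phi" "\<And>i F. i \<in> I \<Longrightarrow> F \<in> Mx \<Longrightarrow> W (rr i) (sr i) a \<notin> F" by blast
  have aA: "a \<in> A" and Ga: "G a \<in> F'" using a by (auto simp: Phi_def)
  have Kr: "(0::real) < real K" using Kpos by simp
  have claim3: "hv F (mul (c q'') a) \<le> hv F b" if F: "F \<in> Mx" for F
  proof -
    define al where "al = hv F a"
    define be where "be = hv F b"
    have al01: "0 \<le> al" "al \<le> 1" using hv_ge0[OF F] hv_le1[OF F] by (auto simp: al_def)
    have be0: "0 \<le> be" using hv_ge0[OF F] by (auto simp: be_def)
    have hm: "hv F (mul (c q'') a) = max (of_rat q'' + al - 1) 0"
      using F aA q''01 by (simp add: hv_mul hv_c al_def)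
    show ?thesis
    proof (cases "of_rat q'' + al - 1 \<le> 0")
      case True then show ?thesis using hm be0 by (simp add: be_def)
    next
      case False
      define i where "i = nat \<lfloor>al * real K\<rfloor>"
      have nn0: "0 \<le> al * real K" using al01 by simp
      have fl: "real i \<le> al * real K" "al * real K < real i + 1"
        using nn0 by (simp_all add: i_def)
      have "al * real K \<le> real K" using al01 Kr by (simp add: mult_left_le_one_le)
      then have iK: "i \<le> K" using fl by linarith
      have rle: "of_rat (rr i) \<le> al" using rr_real[of i] fl Kr by (simp add: divide_le_eq mult.commute)
      have "(al * real K - 1) / real K < real i / real K" using fl(2) Kr by (intro divide_strict_right_mono) linarith+
      moreover have "(al * real K - 1) / real K = al - 1 / real K" using Kr by (simp add: field_simps)
      ultimately have "real i / real K > al - 1 / real K" by simp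
      then have srgt: "of_rat (sr i) > al + of_rat q'' - 1"
        using rr_real[of i] dreal by (simp add: sr_def q''_def of_rat_diff of_rat_add)
      then have "(0::real) < of_rat (sr i)" using False by linarith
      then have iI: "i \<in> I" using iK by (simp add: I_def)
      have r01: "0 \<le> rr i" "rr i \<le> 1" using rr01[OF iK] by auto
      have s01: "0 \<le> sr i" "sr i \<le> 1" using sr01[OF iI] by auto
      have "W (rr i) (sr i) a \<notin> F" using a(2)[OF iI F] .
      then have ne1: "hv F (W (rr i) (sr i) a) \<noteq> 1" using hv_one_iff[OF F] W_in[OF r01 s01 aA] by simp
      have h1: "hv F (imp (c (rr i)) a) = 1"
        using F aA r01 rle by (simp add: hv_imp hv_c al_def min_def)
      have "hv F (W (rr i) (sr i) a) = max (hv F (imp (c (rr i)) a) + hv F (imp b (c (sr i))) - 1) 0"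
        using F aA b r01 s01 by (simp add: W_def hv_mul)
      also have "\<dots> = min (1 - be + of_rat (sr i)) 1"
      proof -
        have sr0: "(0::real) \<le> of_rat (sr i)" using s01 by simp
        have "hv F (imp b (c (sr i))) = min (1 - be + of_rat (sr i)) 1" using F b s01 by (simp add: hv_imp hv_c be_def)
        moreover have "0 \<le> min (1 - be + of_rat (sr i)) 1" using sr0 hv_le1[OF F, of b] by (simp add: be_def)
        ultimately show ?thesis using h1 by simp
      qed
      finally have "min (1 - be + of_rat (sr i)) 1 \<noteq> 1" using ne1 by simp
      then have "be > of_rat (sr i)" by (simp add: min_def split: if_splits)
      then show ?thesis using hm srgt be0 by (simp add: be_def)
    qed
  qed
  have l1: "le (mul (c q'') a) b" using ss_le claim3 aA b q''01 by simp
  have "le (mul a (c q'')) b" using l1 mul_comm[of a "c q''"] aA q''01 by simp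
  then have "le a (imp (c q'') b)" using resid[of a "c q''" b] aA b q''01 by simp
  then have "le (G a) (G (imp (c q'') b))" using G_mono aA b q''01 by simp
  then have "le (G a) (imp (c q'') (G b))" using G_imp_c[OF q''01 b] by simp
  then have "imp (c q'') (G b) \<in> F'" using filt_up2[OF fF' Ga] b q''01 by simp
  then have "of_rat q'' \<le> u" using hv_K[OF F' _ q''01, of "G b"] b by (simp add: u_def)
  then show False using uq'' by simp
qed

end

context tp begin

lemma hvG01: "F \<in> Mx \<Longrightarrow> 0 \<le> hv F x \<and> hv F x \<le> 1" using hv_ge0 hv_le1 by blast

lemma i_bool:
  assumes i: "\<forall>x\<in>A. \<forall>y\<in>A. le (mul (G x) (G y)) (G (mul x y))"
    and F: "F \<in> Mx" and F': "F' \<in> Mx"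
  shows "Rel G F F' \<in> {0, 1}"
proof (rule ccontr)
  assume nb: "Rel G F F' \<notin> {0, 1}"
  define t where "t = Rel G F F'"
  have t0: "0 \<le> t" "t \<le> 1" using Rel_ge0[OF F F'] Rel_le1[OF F F'] by (auto simp: t_def)
  have "t \<noteq> 0" "t \<noteq> 1" using nb by (auto simp: t_def)
  then have t: "0 < t" "t < 1" using t0 by auto
  define e where "e = (1 - t) / 8"
  have e: "0 < e" using t by (simp add: e_def)
  obtain a where a: "a \<in> A" "luk_imp (hv F' (G a)) (hv F a) < t + e"
    using Rel_less[OF F F', where K = G and x = "t + e"] e by (auto simp: t_def)
  define u where "u = hv F' (G a)"
  define w where "w = hv F a"
  have u01: "0 \<le> u" "u \<le> 1" using hvG01[OF F'] by (auto simp: u_def)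
  have w01: "0 \<le> w" "w \<le> 1" using hvG01[OF F] by (auto simp: w_def)
  have e8: "8 * e = 1 - t" by (simp add: e_def)
  have "t + e < 1" using e8 t by linarith
  then have uw: "1 - u + w < t + e" using a(2) by (auto simp: luk_imp_def u_def w_def min_def split: if_splits)
  obtain r where r: "0 \<le> r" "r \<le> 1" "of_rat r \<le> u" "u - e < of_rat r"
    using rat_below[OF u01 e] by blast
  define x where "x = imp (c r) a"
  have xA: "x \<in> A" using a r by (simp add: x_def)
  have Gx: "G x = imp (c r) (G a)" using G_imp_c[OF r(1,2) a(1)] by (simp add: x_def)
  have hGx: "hv F' (G x) = 1" using Gx F' a r by (simp add: hv_imp hv_c u_def[symmetric] min_def)
  have "hv F' (mul (G x) (G x)) = 1" using hGx F' xA by (simp add: hv_mul)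
  moreover have "hv F' (mul (G x) (G x)) \<le> hv F' (G (mul x x))"
    using hv_le[OF F'] i xA by simp
  ultimately have g1: "hv F' (G (mul x x)) = 1" using hvG01[OF F', of "G (mul x x)"] by simp
  have "t \<le> luk_imp (hv F' (G (mul x x))) (hv F (mul x x))" using Rel_lower[OF F F'] xA by (simp add: t_def)
  then have "t \<le> hv F (mul x x)" using g1 by (simp add: luk_imp_def)
  moreover have "hv F (mul x x) = max (2 * hv F x - 1) 0" using F xA by (simp add: hv_mul)
  moreover have "hv F x \<le> 1 - of_rat r + w" using F a r by (simp add: x_def hv_imp hv_c w_def)
  ultimately have "t \<le> 2 * (1 - of_rat r + w) - 1" using t by (simp add: max_def split: if_splits)
  then show False using uw r t e8 by argo
qed

lemma pt:
  assumes bool: "\<forall>F\<in>Mx. \<forall>F'\<in>Mx. Rel G F F' \<in> {0, 1}"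
    and F': "F' \<in> Mx" and a: "a \<in> A" and q1: "q \<le> 1" and lt: "hv F' (G a) < q"
  shows "\<exists>F\<in>Mx. Rel G F F' = 1 \<and> hv F a < q"
proof -
  obtain F where F: "F \<in> Mx" "luk_imp (Rel G F F') (hv F a) < q" using hard[OF F' a lt] by blast
  have "Rel G F F' \<noteq> 0"
  proof
    assume "Rel G F F' = 0"
    then have "luk_imp (Rel G F F') (hv F a) = 1" using hvG01[OF F(1)] by (simp add: luk_imp_def)
    then show False using F q1 by simp
  qed
  then have R: "Rel G F F' = 1" using bool F F' by auto
  then have "luk_imp (Rel G F F') (hv F a) = hv F a" using hvG01[OF F(1)] by (simp add: luk_imp_def)
  then show ?thesis using F R by auto
qed

lemma R1_le: "F \<in> Mx \<Longrightarrow> F' \<in> Mx \<Longrightarrow> a \<in> A \<Longrightarrow> Rel G F F' = 1 \<Longrightarrow> hv F' (G a) \<le> hv F a"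
  using Rel_lower[of F F' a G] by (simp add: luk_imp_def min_def split: if_splits)

lemma bool_props:
  assumes bool: "\<forall>F\<in>Mx. \<forall>F'\<in>Mx. Rel G F F' \<in> {0, 1}"
  shows "\<forall>x\<in>A. \<forall>y\<in>A. le (mul (G x) (G y)) (G (mul x y)) \<and> le (ad (G x) (G y)) (G (ad x y))"
    and "\<forall>x\<in>A. mul (G x) (G x) = G (mul x x) \<and> ad (G x) (G x) = G (ad x x)"
proof -
  have pa: "le (mul (G x) (G y)) (G (mul x y))" if x: "x \<in> A" and y: "y \<in> A" for x y
  proof (rule ss_le)
    fix F' assume F': "F' \<in> Mx"
    define q where "q = max (hv F' (G x) + hv F' (G y) - 1) 0"
    have lhs: "hv F' (mul (G x) (G y)) = q" using F' x y by (simp add: hv_mul q_def)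
    have q1: "q \<le> 1" using hvG01[OF F', of "G x"] hvG01[OF F', of "G y"] by (simp add: q_def)
    show "hv F' (mul (G x) (G y)) \<le> hv F' (G (mul x y))"
    proof (rule ccontr)
      assume "\<not> ?thesis"
      then have lt: "hv F' (G (mul x y)) < q" using lhs by simp
      obtain F where F: "F \<in> Mx" "Rel G F F' = 1" "hv F (mul x y) < q" using pt[OF bool F' _ q1 lt] x y by auto
      have "hv F' (G x) \<le> hv F x" "hv F' (G y) \<le> hv F y" using R1_le[OF F(1) F'] F(2) x y by auto
      moreover have "hv F (mul x y) = max (hv F x + hv F y - 1) 0" using F x y by (simp add: hv_mul)
      ultimately show False using F(3) unfolding q_def by (simp add: max_def split: if_splits; linarith)
    qed
  qed (use x y in simp_all)
  have pb: "le (ad (G x) (G y)) (G (ad x y))" if x: "x \<in> A" and y: "y \<in> A" for x y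
  proof (rule ss_le)
    fix F' assume F': "F' \<in> Mx"
    define q where "q = min (hv F' (G x) + hv F' (G y)) 1"
    have lhs: "hv F' (ad (G x) (G y)) = q" using F' x y by (simp add: hv_ad q_def)
    have q1: "q \<le> 1" by (simp add: q_def)
    show "hv F' (ad (G x) (G y)) \<le> hv F' (G (ad x y))"
    proof (rule ccontr)
      assume "\<not> ?thesis"
      then have lt: "hv F' (G (ad x y)) < q" using lhs by simp
      obtain F where F: "F \<in> Mx" "Rel G F F' = 1" "hv F (ad x y) < q" using pt[OF bool F' _ q1 lt] x y by auto
      have "hv F' (G x) \<le> hv F x" "hv F' (G y) \<le> hv F y" using R1_le[OF F(1) F'] F(2) x y by auto
      moreover have "hv F (ad x y) = min (hv F x + hv F y) 1" using F x y by (simp add: hv_ad)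
      ultimately show False using F(3) unfolding q_def by (simp add: min_def split: if_splits; linarith)
    qed
  qed (use x y in simp_all)
  have pc: "le (G (mul x x)) (mul (G x) (G x))" if x: "x \<in> A" for x
  proof (rule ss_le)
    fix F' assume F': "F' \<in> Mx"
    define u where "u = hv F' (G x)"
    define g where "g = hv F' (G (mul x x))"
    have u01: "0 \<le> u" "u \<le> 1" using hvG01[OF F'] by (auto simp: u_def)
    have g01: "0 \<le> g" "g \<le> 1" using hvG01[OF F'] by (auto simp: g_def)
    have rhs: "hv F' (mul (G x) (G x)) = max (2 * u - 1) 0" using F' x by (simp add: hv_mul u_def)
    show "hv F' (G (mul x x)) \<le> hv F' (mul (G x) (G x))"
    proof (rule ccontr)
      assume "\<not> ?thesis"
      then have gt: "max (2 * u - 1) 0 < g" using rhs unfolding g_def by linarith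
      define d where "d = g - max (2 * u - 1) 0"
      have d: "0 < d" using gt by (simp add: d_def)
      define q where "q = u + d / 4"
      have m: "2 * u - 1 \<le> max (2 * u - 1) 0" by simp
      have "4 * q = 4 * u + d" unfolding q_def by (simp add: field_simps)
      then have q1: "q \<le> 1" using m u01 g01 d_def by linarith
      have uq: "u < q" using d by (simp add: q_def)
      obtain F where F: "F \<in> Mx" "Rel G F F' = 1" "hv F x < q" using pt[OF bool F' x q1] uq by (auto simp: u_def)
      have "g \<le> hv F (mul x x)" using R1_le[OF F(1) F' _ F(2), of "mul x x"] x by (simp add: g_def)
      moreover have "hv F (mul x x) = max (2 * hv F x - 1) 0" using F x by (simp add: hv_mul)
      moreover have "4 * q = 4 * u + d" unfolding q_def by (simp add: field_simps)
      ultimately show False using F(3) gt d_def by (simp add: max_def split: if_splits; linarith)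
    qed
  qed (use x in simp_all)
  have pd: "le (G (ad x x)) (ad (G x) (G x))" if x: "x \<in> A" for x
  proof (rule ss_le)
    fix F' assume F': "F' \<in> Mx"
    define u where "u = hv F' (G x)"
    define g where "g = hv F' (G (ad x x))"
    have u01: "0 \<le> u" "u \<le> 1" using hvG01[OF F'] by (auto simp: u_def)
    have g01: "0 \<le> g" "g \<le> 1" using hvG01[OF F'] by (auto simp: g_def)
    have rhs: "hv F' (ad (G x) (G x)) = min (2 * u) 1" using F' x by (simp add: hv_ad u_def)
    show "hv F' (G (ad x x)) \<le> hv F' (ad (G x) (G x))"
    proof (rule ccontr)
      assume "\<not> ?thesis"
      then have gt: "min (2 * u) 1 < g" using rhs unfolding g_def by linarith
      then have gt2: "2 * u < g" using g01 by (simp add: min_def split: if_splits)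
      define q where "q = u + (g - 2 * u) / 4"
      have q4: "4 * q = 4 * u + (g - 2 * u)" unfolding q_def by (simp add: field_simps)
      have q1: "q \<le> 1" using u01 g01 gt2 q4 by linarith
      have uq: "u < q" using gt2 by (simp add: q_def)
      obtain F where F: "F \<in> Mx" "Rel G F F' = 1" "hv F x < q" using pt[OF bool F' x q1] uq by (auto simp: u_def)
      have "g \<le> hv F (ad x x)" using R1_le[OF F(1) F' _ F(2), of "ad x x"] x by (simp add: g_def)
      moreover have "hv F (ad x x) = min (2 * hv F x) 1" using F x by (simp add: hv_ad)
      ultimately show False using F(3) gt2 q4 by (simp add: min_def split: if_splits; linarith)
    qed
  qed (use x in simp_all)
  show "\<forall>x\<in>A. \<forall>y\<in>A. le (mul (G x) (G y)) (G (mul x y)) \<and> le (ad (G x) (G y)) (G (ad x y))"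
    using pa pb by blast
  show "\<forall>x\<in>A. mul (G x) (G x) = G (mul x x) \<and> ad (G x) (G x) = G (ad x x)"
    using pa pc pb pd le_antisym by (meson G_in ad_in mul_in)
qed

end

theorem theorem12:
  fixes A :: "'a set" and ad :: "'a \<Rightarrow> 'a \<Rightarrow> 'a" and ng :: "'a \<Rightarrow> 'a"
    and c :: "rat \<Rightarrow> 'a" and G H :: "'a \<Rightarrow> 'a"
  assumes tense: "tense_pavelka A ad ng c G H"
    and ss: "mv_semisimple A ad ng (c 0)"
  defines "mul \<equiv> mv_mult ad ng" and "le \<equiv> mv_le ad ng (c 0)" and "one \<equiv> mv_one ng (c 0)"
  shows "let
      i = (\<forall>x\<in>A. \<forall>y\<in>A. le (mul (G x) (G y)) (G (mul x y)));
      ii = (\<forall>x\<in>A. \<forall>y\<in>A. le (mul (H x) (H y)) (H (mul x y)));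
      iii = (\<forall>F\<in>max_filters A ad ng (c 0). \<forall>F'\<in>max_filters A ad ng (c 0).
               time_rel A ad ng (c 0) G F F' \<in> {0, 1});
      iv = (G one = one \<and> H one = one \<and>
            (\<forall>x\<in>A. \<forall>y\<in>A.
               le (mul (G x) (G y)) (G (mul x y)) \<and> le (mul (H x) (H y)) (H (mul x y)) \<and>
               le (ad (G x) (G y)) (G (ad x y)) \<and> le (ad (H x) (H y)) (H (ad x y))) \<and>
            (\<forall>x\<in>A.
               mul (G x) (G x) = G (mul x x) \<and> mul (H x) (H x) = H (mul x x) \<and>
               ad (G x) (G x) = G (ad x x) \<and> ad (H x) (H x) = H (ad x x) \<and>
               le (ng (G (ng (H x)))) x \<and> le (ng (H (ng (G x)))) x))
    in (i \<longleftrightarrow> ii) \<and> (i \<longleftrightarrow> iii) \<and> (i \<longleftrightarrow> iv)"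
proof -
  have pv: "pavelka_algebra A ad ng c" using tense by (simp add: tense_pavelka_def)
  have tpG: "tp A ad ng c G H" unfolding tp_def tp_axioms_def pav_def using pv tense ss by simp
  have tpH: "tp A ad ng c H G" using tp_sym[OF tpG] .
  interpret T: tp A ad ng c G H by (rule tpG)
  define i where "i = (\<forall>x\<in>A. \<forall>y\<in>A. mv_le ad ng (c 0) (mv_mult ad ng (G x) (G y)) (G (mv_mult ad ng x y)))"
  define ii where "ii = (\<forall>x\<in>A. \<forall>y\<in>A. mv_le ad ng (c 0) (mv_mult ad ng (H x) (H y)) (H (mv_mult ad ng x y)))"
  define bG where "bG = (\<forall>F\<in>max_filters A ad ng (c 0). \<forall>F'\<in>max_filters A ad ng (c 0). T.Rel G F F' \<in> {0, 1})"
  define bH where "bH = (\<forall>F\<in>max_filters A ad ng (c 0). \<forall>F'\<in>max_filters A ad ng (c 0). T.Rel H F F' \<in> {0, 1})"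
  have bGH: "bG \<longleftrightarrow> bH" unfolding bG_def bH_def using T.Rel_sym by auto
  have iii: "(\<forall>F\<in>max_filters A ad ng (c 0). \<forall>F'\<in>max_filters A ad ng (c 0).
               time_rel A ad ng (c 0) G F F' \<in> {0, 1}) \<longleftrightarrow> bG"
    unfolding bG_def using T.time_rel_eq by auto
  have ib: "i \<Longrightarrow> bG" unfolding i_def bG_def using T.i_bool by blast
  have iib: "ii \<Longrightarrow> bH" unfolding ii_def bH_def using tp.i_bool[OF tpH] by blast
  have Gp: "bG \<Longrightarrow> (\<forall>x\<in>A. \<forall>y\<in>A. mv_le ad ng (c 0) (mv_mult ad ng (G x) (G y)) (G (mv_mult ad ng x y)) \<and>
        mv_le ad ng (c 0) (ad (G x) (G y)) (G (ad x y))) \<and>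
      (\<forall>x\<in>A. mv_mult ad ng (G x) (G x) = G (mv_mult ad ng x x) \<and> ad (G x) (G x) = G (ad x x))"
    unfolding bG_def using T.bool_props by blast
  have Hp: "bH \<Longrightarrow> (\<forall>x\<in>A. \<forall>y\<in>A. mv_le ad ng (c 0) (mv_mult ad ng (H x) (H y)) (H (mv_mult ad ng x y)) \<and>
        mv_le ad ng (c 0) (ad (H x) (H y)) (H (ad x y))) \<and>
      (\<forall>x\<in>A. mv_mult ad ng (H x) (H x) = H (mv_mult ad ng x x) \<and> ad (H x) (H x) = H (ad x x))"
    unfolding bH_def using tp.bool_props[OF tpH] by blast
  have G1: "G (ng (c 0)) = ng (c 0)" using T.G_one .
  have H1: "H (ng (c 0)) = ng (c 0)" using tp.G_one[OF tpH] .
  have P3: "\<forall>x\<in>A. mv_le ad ng (c 0) (ng (G (ng (H x)))) x \<and> mv_le ad ng (c 0) (ng (H (ng (G x)))) x"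
    using T.PT3 T.PT3' by blast
  define III where "III = (\<forall>F\<in>max_filters A ad ng (c 0). \<forall>F'\<in>max_filters A ad ng (c 0).
               time_rel A ad ng (c 0) G F F' \<in> {0, 1})"
  define IV where "IV = (G (mv_one ng (c 0)) = mv_one ng (c 0) \<and> H (mv_one ng (c 0)) = mv_one ng (c 0) \<and>
            (\<forall>x\<in>A. \<forall>y\<in>A.
               mv_le ad ng (c 0) (mv_mult ad ng (G x) (G y)) (G (mv_mult ad ng x y)) \<and> mv_le ad ng (c 0) (mv_mult ad ng (H x) (H y)) (H (mv_mult ad ng x y)) \<and>
               mv_le ad ng (c 0) (ad (G x) (G y)) (G (ad x y)) \<and> mv_le ad ng (c 0) (ad (H x) (H y)) (H (ad x y))) \<and>
            (\<forall>x\<in>A.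
               mv_mult ad ng (G x) (G x) = G (mv_mult ad ng x x) \<and> mv_mult ad ng (H x) (H x) = H (mv_mult ad ng x x) \<and>
               ad (G x) (G x) = G (ad x x) \<and> ad (H x) (H x) = H (ad x x) \<and>
               mv_le ad ng (c 0) (ng (G (ng (H x)))) x \<and> mv_le ad ng (c 0) (ng (H (ng (G x)))) x))"
  have iG: "i \<longleftrightarrow> bG" using ib Gp unfolding i_def by blast
  have iiH: "ii \<longleftrightarrow> bH" using iib Hp unfolding ii_def by blast
  have e1: "i \<longleftrightarrow> ii" using iG iiH bGH by blast
  have e2: "i \<longleftrightarrow> III" using iG iii unfolding III_def by blast
  have e3: "i \<longleftrightarrow> IV"
  proof
    assume "i"
    then have bG bH using iG bGH by blast+
    then show IV unfolding IV_def mv_one_def using Gp Hp G1 H1 P3 by blast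
  next
    assume IV
    then show i unfolding IV_def i_def by blast
  qed
  have "(i \<longleftrightarrow> ii) \<and> (i \<longleftrightarrow> III) \<and> (i \<longleftrightarrow> IV)" using e1 e2 e3 by blast
  then show ?thesis unfolding Let_def mul_def le_def one_def i_def ii_def III_def IV_def .
qed

end
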